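(* Let $k$ be a field of characteristic different from $2$. The morphism $\Psi_1$ induces a morphism $\mathbb{G}_m\to S_2$. For $n\geq 2$, the morphism $\Psi_n$ induces a pointed morphism \[ \Psi_n: Q_{2n-1}\longrightarrow\begin{cases} O_{2^{n-1}} & n\equiv 0 \pmod 4,\\ S_{2^{n-1}}\cong (GL_{2^{n-1}}/O_{2^{n-1}})_{\text{\'et}} & n\equiv 1\pmod 4,\\ Sp_{2^{n-1}} & n\equiv 2\pmod 4,\\ A_{2^{n-1}}\cong GL_{2^{n-1}}/Sp_{2^{n-1}} & n\equiv 3\pmod 4.\end{cases} \]
   Context: $Q_{2n-1}=\operatorname{Spec} k[x_1,\dots,x_n,y_1,\dots,y_n]/(\sum_i x_iy_i-1)$, pointed by $x=y=(1,0,\dots,0)$. For $m\ge1$, $\tau_{2m}$ is the block sum of $m$ copies of $\begin{pmatrix}0&1\\0&0\end{pmatrix}$, $\sigma_{2m}=\tau_{2m}+\tau_{2m}^t$, $\psi_{2m}=\tau_{2m}-\tau_{2m}^t$; $O_{2m}$ is the orthogonal group of $\sigma_{2m}$ and $Sp_{2m}$ the symplectic group of $\psi_{2m}$ (pointed by the identity), $S_{2m}$ is the scheme of invertible symmetric $2m\times 2m$ matrices (pointed by $\sigma_{2m}$, with $S_{2m}\cong (GL_{2m}/O_{2m})_{\text{\'et}}$ via $g\mapsto g^t\sigma_{2m}g$), $A_{2m}$ the scheme of invertible antisymmetric matrices (pointed by $\psi_{2m}$, $A_{2m}\cong GL_{2m}/Sp_{2m}$ via $g\mapsto g^t\psi_{2m}g$).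 Suslin matrices: for a commutative ring $R$ and $a=(a_1,\dots,a_n)$, $b=(b_1,\dots,b_n)\in R^n$, $\alpha_1(a,b)=a_1$ and for $n\ge2$, $\alpha_n(a,b)=\begin{pmatrix}a_1\mathrm{Id}_{2^{n-2}}&\alpha_{n-1}(a',b')\\-\alpha_{n-1}(b',a')^t&b_1\mathrm{Id}_{2^{n-2}}\end{pmatrix}$ where $a'=(a_2,\dots,a_n)$, $b'=(b_2,\dots,b_n)$. Let $I_1=1$, $I_n=\begin{pmatrix}0&I_{n-1}\\-I_{n-1}&0\end{pmatrix}$ for $n$ even, $I_n=\begin{pmatrix}I_{n-1}&0\\0&-I_{n-1}\end{pmatrix}$ for $n\ge 3$ odd. Define $E_n\in M_{2^{n-1}}(\mathbb{Z})$ by $E_1=E_2=\mathrm{Id}$ and for $n\ge3$ (block matrices with blocks of size $2^{n-2}$, $1$ an identity block): if $n\equiv0\ (4)$: $E_n=\begin{pmatrix}1&0\\0&I_{n-1}^t\end{pmatrix}\begin{pmatrix}1&0\\\tau_{2^{n-2}}&1\end{pmatrix}\begin{pmatrix}1&-\sigma_{2^{n-2}}\\0&1\end{pmatrix}\begin{pmatrix}1&0\\0&\psi_{2^{n-2}}\end{pmatrix}$; if $n\equiv1\ (4)$: $E_n=\begin{pmatrix}E_{n-1}&0\\0&E_{n-1}\end{pmatrix}\begin{pmatrix}1&0\\0&\psi_{2^{n-2}}\end{pmatrix}$; if $n\equiv2\ (4)$: $E_n=\begin{pmatrix}1&0\\0&I_{n-1}^t\end{pmatrix}\begin{pmatrix}1&0\\\tau_{2^{n-2}}&1\end{pmatrix}\begin{pmatrix}1&\psi_{2^{n-2}}\\0&1\end{pmatrix}\begin{pmatrix}1&0\\0&\sigma_{2^{n-2}}\end{pmatrix}$;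 if $n\equiv3\ (4)$: $E_n=\begin{pmatrix}E_{n-1}&0\\0&E_{n-1}\end{pmatrix}\begin{pmatrix}1&0\\0&\sigma_{2^{n-2}}\end{pmatrix}$. Let $\alpha_n=\alpha_n(x,y)$ over $Q_{2n-1}$. Define $\Psi_1:\mathbb{G}_m\to GL_2$, $t\mapsto\mathrm{diag}(t,-1)$, and for $n\ge2$ the morphism $\Psi_n:Q_{2n-1}\to GL_{2^{n-1}}$ by $\Psi_n=E_n^{-1}\alpha_n^tE_n$ if $n$ is even and $\Psi_n=E_n^t\alpha_nI_nE_n$ if $n$ is odd. *)

theory Defs
  imports "Jordan_Normal_Form.Determinant"
begin

definition tau :: "nat \<Rightarrow> int mat" where
  "tau N = mat N N (\<lambda>(i,j). if even i \<and> j = Suc i then 1 else 0)"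

definition sigma :: "nat \<Rightarrow> int mat" where
  "sigma N = tau N + transpose_mat (tau N)"

definition psi :: "nat \<Rightarrow> int mat" where
  "psi N = tau N - transpose_mat (tau N)"

fun Imat :: "nat \<Rightarrow> int mat" where
  "Imat 0 = 1\<^sub>m 1"
| "Imat (Suc 0) = 1\<^sub>m 1"
| "Imat (Suc (Suc m)) =
     (if even (Suc (Suc m))
      then four_block_mat (0\<^sub>m (2^m) (2^m)) (Imat (Suc m)) (- Imat (Suc m)) (0\<^sub>m (2^m) (2^m))
      else four_block_mat (Imat (Suc m)) (0\<^sub>m (2^m) (2^m)) (0\<^sub>m (2^m) (2^m)) (- Imat (Suc m)))"

definition blk_diag :: "nat \<Rightarrow> int mat \<Rightarrow> int mat \<Rightarrow> int mat" where
  "blk_diag h A D = four_block_mat A (0\<^sub>m h h) (0\<^sub>m h h) D"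

definition blk_lower :: "nat \<Rightarrow> int mat \<Rightarrow> int mat" where
  "blk_lower h C = four_block_mat (1\<^sub>m h) (0\<^sub>m h h) C (1\<^sub>m h)"

definition blk_upper :: "nat \<Rightarrow> int mat \<Rightarrow> int mat" where
  "blk_upper h B = four_block_mat (1\<^sub>m h) B (0\<^sub>m h h) (1\<^sub>m h)"

fun Emat :: "nat \<Rightarrow> int mat" where
  "Emat 0 = 1\<^sub>m 1"
| "Emat (Suc 0) = 1\<^sub>m 1"
| "Emat (Suc (Suc 0)) = 1\<^sub>m 2"
| "Emat (Suc (Suc (Suc m))) =
     (let n = Suc (Suc (Suc m)); h = 2 ^ Suc m in
      if n mod 4 = 0 then
        blk_diag h (1\<^sub>m h) (transpose_mat (Imat (n - 1))) * blk_lower h (tau h)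
          * blk_upper h (- sigma h) * blk_diag h (1\<^sub>m h) (psi h)
      else if n mod 4 = 1 then
        blk_diag h (Emat (n - 1)) (Emat (n - 1)) * blk_diag h (1\<^sub>m h) (psi h)
      else if n mod 4 = 2 then
        blk_diag h (1\<^sub>m h) (transpose_mat (Imat (n - 1))) * blk_lower h (tau h)
          * blk_upper h (psi h) * blk_diag h (1\<^sub>m h) (sigma h)
      else
        blk_diag h (Emat (n - 1)) (Emat (n - 1)) * blk_diag h (1\<^sub>m h) (sigma h))"

text \<open>The (two-sided) inverse of an integer matrix (it exists for E_n).\<close>
definition int_mat_inv :: "nat \<Rightarrow> int mat \<Rightarrow> int mat" where
  "int_mat_inv N A = (THE B. B \<in> carrier_mat N N \<and> A * B = 1\<^sub>m N \<and> B * A = 1\<^sub>m N)"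

definition ofm :: "int mat \<Rightarrow> 'r::comm_ring_1 mat" where
  "ofm A = map_mat of_int A"

text \<open>Suslin matrices alpha_n(a,b); the vector (a_1,...,a_n) is a 0 ... a (n-1).\<close>
fun alpha :: "nat \<Rightarrow> (nat \<Rightarrow> 'r::comm_ring_1) \<Rightarrow> (nat \<Rightarrow> 'r) \<Rightarrow> 'r mat" where
  "alpha 0 a b = mat 1 1 (\<lambda>_. a 0)"
| "alpha (Suc 0) a b = mat 1 1 (\<lambda>_. a 0)"
| "alpha (Suc (Suc m)) a b =
     four_block_mat (a 0 \<cdot>\<^sub>m 1\<^sub>m (2^m)) (alpha (Suc m) (a \<circ> Suc) (b \<circ> Suc))
       (- transpose_mat (alpha (Suc m) (b \<circ> Suc) (a \<circ> Suc))) (b 0 \<cdot>\<^sub>m 1\<^sub>m (2^m))"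

definition Psi1 :: "'r::comm_ring_1 \<Rightarrow> 'r mat" where
  "Psi1 t = mat 2 2 (\<lambda>(i,j). if i = 0 \<and> j = 0 then t else if i = 1 \<and> j = 1 then -1 else 0)"

text \<open>Psi_n for n >= 2 on a point (x,y) of Q_{2n-1}.\<close>
definition Psi :: "nat \<Rightarrow> (nat \<Rightarrow> 'r::comm_ring_1) \<Rightarrow> (nat \<Rightarrow> 'r) \<Rightarrow> 'r mat" where
  "Psi n x y =
     (if even n then ofm (int_mat_inv (2^(n-1)) (Emat n)) * transpose_mat (alpha n x y) * ofm (Emat n)
      else transpose_mat (ofm (Emat n)) * alpha n x y * ofm (Imat n) * ofm (Emat n))"

text \<open>Base point of Q_{2n-1}: x = y = (1,0,...,0).\<close>
definition e1 :: "nat \<Rightarrow> 'r::comm_ring_1" where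
  "e1 i = (if i = 0 then 1 else 0)"

text \<open>R-points of the target schemes (N x N matrices).\<close>
definition in_GL :: "nat \<Rightarrow> 'r::comm_ring_1 mat \<Rightarrow> bool" where
  "in_GL N g \<longleftrightarrow> g \<in> carrier_mat N N \<and> det g dvd 1"

definition in_O :: "nat \<Rightarrow> 'r::comm_ring_1 mat \<Rightarrow> bool" where
  "in_O N g \<longleftrightarrow> in_GL N g \<and> transpose_mat g * ofm (sigma N) * g = ofm (sigma N)"

definition in_Sp :: "nat \<Rightarrow> 'r::comm_ring_1 mat \<Rightarrow> bool" where
  "in_Sp N g \<longleftrightarrow> in_GL N g \<and> transpose_mat g * ofm (psi N) * g = ofm (psi N)"

definition in_S :: "nat \<Rightarrow> 'r::comm_ring_1 mat \<Rightarrow> bool" where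
  "in_S N g \<longleftrightarrow> in_GL N g \<and> transpose_mat g = g"

definition in_A :: "nat \<Rightarrow> 'r::comm_ring_1 mat \<Rightarrow> bool" where
  "in_A N g \<longleftrightarrow> in_GL N g \<and> transpose_mat g = - g"

end

theory Submission
  imports Defs
begin


definition pp :: "nat \<Rightarrow> nat" where "pp i = (if even i then Suc i else i - 1)"
definition sg :: "nat \<Rightarrow> int" where "sg i = (if even i then 1 else -1)"

lemma pp_pp[simp]: "pp (pp i) = i" unfolding pp_def by auto
lemma sg_pp[simp]: "sg (pp i) = - sg i" unfolding pp_def sg_def by auto
lemma even_pp[simp]: "even (pp i) = odd i" unfolding pp_def by auto
lemma pp_lt: "even h \<Longrightarrow> i < h \<Longrightarrow> pp i < h" unfolding pp_def
  by (auto, metis Suc_lessI even_Suc odd_Suc_minus_one)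
lemma pp_sym: "(j = pp i) = (i = pp j)" unfolding pp_def by auto

lemma tau_carrier[simp]: "tau h \<in> carrier_mat h h" unfolding tau_def by auto
lemma sigma_carrier[simp]: "sigma h \<in> carrier_mat h h" unfolding sigma_def by auto
lemma psi_carrier[simp]: "psi h \<in> carrier_mat h h" unfolding psi_def
  by (rule minus_carrier_mat, auto)
lemma dim_sigma[simp]: "dim_row (sigma h) = h" "dim_col (sigma h) = h"
  using sigma_carrier by (auto simp del: sigma_carrier)
lemma dim_psi[simp]: "dim_row (psi h) = h" "dim_col (psi h) = h"
  using psi_carrier by (auto simp del: psi_carrier)

lemma sigma_idx: "i < h \<Longrightarrow> j < h \<Longrightarrow> sigma h $$ (i,j) = (if j = pp i then 1 else 0)"
  unfolding sigma_def tau_def pp_def by auto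
lemma psi_idx: "i < h \<Longrightarrow> j < h \<Longrightarrow> psi h $$ (i,j) = (if j = pp i then sg i else 0)"
  unfolding psi_def tau_def pp_def sg_def by auto

lemma mult_pp:
  assumes h: "even h" and A: "A \<in> carrier_mat h h" and B: "B \<in> carrier_mat h m"
    and Ai: "\<And>i k. i < h \<Longrightarrow> k < h \<Longrightarrow> A $$ (i,k) = (if k = pp i then c i else 0)"
    and i: "i < h" and j: "j < m"
  shows "(A * B) $$ (i,j) = c i * B $$ (pp i, j)"
proof -
  have "(A * B) $$ (i,j) = (\<Sum>k\<in>{0..<h}. A $$ (i,k) * B $$ (k,j))"
    using A B i j by (simp add: index_mult_mat scalar_prod_def)
  also have "\<dots> = (\<Sum>k\<in>{0..<h}. if k = pp i then c i * B $$ (k,j) else 0)"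
    by (rule sum.cong, auto simp: Ai i)
  also have "\<dots> = c i * B $$ (pp i, j)" using pp_lt[OF h i] by (simp add: sum.delta)
  finally show ?thesis .
qed

lemma sigma_sq: assumes h: "even h" shows "sigma h * sigma h = 1\<^sub>m h"
proof (rule eq_matI)
  fix i j assume i: "i < dim_row (1\<^sub>m h :: int mat)" and j: "j < dim_col (1\<^sub>m h :: int mat)"
  hence i: "i < h" and j: "j < h" by auto
  have "(sigma h * sigma h) $$ (i,j) = 1 * sigma h $$ (pp i, j)"
    by (rule mult_pp[OF h sigma_carrier sigma_carrier _ i j], simp add: sigma_idx)
  also have "\<dots> = 1\<^sub>m h $$ (i,j)" using i j pp_lt[OF h i] by (auto simp: sigma_idx pp_sym)
  finally show "(sigma h * sigma h) $$ (i,j) = 1\<^sub>m h $$ (i,j)" .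
qed auto

lemma psi_sq: assumes h: "even h" shows "psi h * psi h = - 1\<^sub>m h"
proof (rule eq_matI)
  fix i j assume i: "i < dim_row (- 1\<^sub>m h :: int mat)" and j: "j < dim_col (- 1\<^sub>m h :: int mat)"
  hence i: "i < h" and j: "j < h" by auto
  have "(psi h * psi h) $$ (i,j) = sg i * psi h $$ (pp i, j)"
    by (rule mult_pp[OF h psi_carrier psi_carrier _ i j], simp add: psi_idx)
  also have "\<dots> = (- 1\<^sub>m h) $$ (i,j)" using i j pp_lt[OF h i]
    by (auto simp: psi_idx pp_sym sg_def)
  finally show "(psi h * psi h) $$ (i,j) = (- 1\<^sub>m h) $$ (i,j)" .
qed auto

lemma sigma_T: "(sigma h)\<^sup>T = sigma h"
  by (rule eq_matI, auto simp: sigma_idx pp_sym)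
lemma psi_T: "(psi h)\<^sup>T = - psi h"
  by (rule eq_matI, auto simp: psi_idx pp_sym)

lemma sigma_psi_sigma: assumes h: "even h" shows "sigma h * (psi h * sigma h) = - psi h"
proof (rule eq_matI)
  fix i j assume i: "i < dim_row (- psi h)" and j: "j < dim_col (- psi h)"
  hence i: "i < h" and j: "j < h" by auto
  have "(sigma h * (psi h * sigma h)) $$ (i,j) = 1 * (psi h * sigma h) $$ (pp i, j)"
    by (rule mult_pp[OF h sigma_carrier mult_carrier_mat[OF psi_carrier sigma_carrier] _ i j], simp add: sigma_idx)
  also have "(psi h * sigma h) $$ (pp i, j) = sg (pp i) * sigma h $$ (pp (pp i), j)"
    by (rule mult_pp[OF h psi_carrier sigma_carrier _ pp_lt[OF h i] j], simp add: psi_idx)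
  hence "1 * (psi h * sigma h) $$ (pp i, j) = sg (pp i) * sigma h $$ (pp (pp i), j)" by simp
  also have "\<dots> = (- psi h) $$ (i,j)" using i j pp_lt[OF h i]
    by (auto simp: psi_idx sigma_idx pp_sym)
  finally show "(sigma h * (psi h * sigma h)) $$ (i,j) = (- psi h) $$ (i,j)" .
qed auto

lemma psi_sigma_psi: assumes h: "even h" shows "psi h * (sigma h * psi h) = sigma h"
proof (rule eq_matI)
  fix i j assume i: "i < dim_row (sigma h)" and j: "j < dim_col (sigma h)"
  hence i: "i < h" and j: "j < h" by auto
  have "(psi h * (sigma h * psi h)) $$ (i,j) = sg i * (sigma h * psi h) $$ (pp i, j)"
    by (rule mult_pp[OF h psi_carrier mult_carrier_mat[OF sigma_carrier psi_carrier] _ i j], simp add: psi_idx)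
  also have "(sigma h * psi h) $$ (pp i, j) = 1 * psi h $$ (pp (pp i), j)"
    by (rule mult_pp[OF h sigma_carrier psi_carrier _ pp_lt[OF h i] j], simp add: sigma_idx)
  hence "sg i * (sigma h * psi h) $$ (pp i, j) = sg i * (1 * psi h $$ (pp (pp i), j))" by simp
  also have "\<dots> = sigma h $$ (i,j)" using i j pp_lt[OF h i]
    by (auto simp: psi_idx sigma_idx pp_sym sg_def)
  finally show "(psi h * (sigma h * psi h)) $$ (i,j) = sigma h $$ (i,j)" .
qed auto


lemma pp_shift: assumes "even h" "h \<le> i" shows "pp i = pp (i - h) + h"
proof (cases "even i")
  case True thus ?thesis using assms by (simp add: pp_def)
next
  case False
  hence "h < i" using assms by (metis le_neq_implies_less)
  thus ?thesis using assms False by (simp add: pp_def)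
qed

lemma sigma_block: assumes h: "even h"
  shows "sigma (h + h) = four_block_mat (sigma h) (0\<^sub>m h h) (0\<^sub>m h h) (sigma h)"
proof (rule eq_matI)
  fix i j assume "i < dim_row (four_block_mat (sigma h) (0\<^sub>m h h) (0\<^sub>m h h) (sigma h))"
    "j < dim_col (four_block_mat (sigma h) (0\<^sub>m h h) (0\<^sub>m h h) (sigma h))"
  hence i: "i < h + h" and j: "j < h + h" by auto
  show "sigma (h + h) $$ (i,j) = four_block_mat (sigma h) (0\<^sub>m h h) (0\<^sub>m h h) (sigma h) $$ (i,j)"
  proof (cases "i < h")
    case True
    hence "pp i < h" using pp_lt[OF h] by auto
    thus ?thesis using i j True by (auto simp: sigma_idx)
  next
    case False
    hence "pp i = pp (i - h) + h" using pp_shift[OF h] by auto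
    thus ?thesis using i j False by (auto simp: sigma_idx)
  qed
qed auto

lemma psi_block: assumes h: "even h"
  shows "psi (h + h) = four_block_mat (psi h) (0\<^sub>m h h) (0\<^sub>m h h) (psi h)"
proof (rule eq_matI)
  fix i j assume "i < dim_row (four_block_mat (psi h) (0\<^sub>m h h) (0\<^sub>m h h) (psi h))"
    "j < dim_col (four_block_mat (psi h) (0\<^sub>m h h) (0\<^sub>m h h) (psi h))"
  hence i: "i < h + h" and j: "j < h + h" by auto
  show "psi (h + h) $$ (i,j) = four_block_mat (psi h) (0\<^sub>m h h) (0\<^sub>m h h) (psi h) $$ (i,j)"
  proof (cases "i < h")
    case True
    hence "pp i < h" using pp_lt[OF h] by auto
    thus ?thesis using i j True by (auto simp: psi_idx)
  next
    case False
    hence "pp i = pp (i - h) + h" "sg i = sg (i - h)" using pp_shift[OF h] h by (auto simp: sg_def)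
    thus ?thesis using i j False by (auto simp: psi_idx)
  qed
qed auto


lemma pow_suc_split: "(2::nat) ^ Suc m = 2^m + 2^m" by simp

lemma Imat_carrier: "Imat n \<in> carrier_mat (2^(n-1)) (2^(n-1))"
proof (induction n rule: Imat.induct)
  case (3 m)
  thus ?case by (simp only: Imat.simps diff_Suc_1 pow_suc_split, auto)
qed auto

lemma mult_fb:
  assumes "A1 \<in> carrier_mat h h" "B1 \<in> carrier_mat h h" "C1 \<in> carrier_mat h h" "D1 \<in> carrier_mat h h"
    "A2 \<in> carrier_mat h h" "B2 \<in> carrier_mat h h" "C2 \<in> carrier_mat h h" "D2 \<in> carrier_mat h h"
  shows "four_block_mat A1 B1 C1 D1 * four_block_mat A2 B2 C2 D2
  = four_block_mat (A1 * A2 + B1 * C2) (A1 * B2 + B1 * D2) (C1 * A2 + D1 * C2) (C1 * B2 + D1 * D2)"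
  by (rule mult_four_block_mat, insert assms, auto)

lemma transpose_fb:
  assumes "A \<in> carrier_mat h h" "B \<in> carrier_mat h h" "C \<in> carrier_mat h h" "D \<in> carrier_mat h h"
  shows "(four_block_mat A B C D)\<^sup>T = four_block_mat A\<^sup>T C\<^sup>T B\<^sup>T D\<^sup>T"
  by (rule transpose_four_block_mat, insert assms, auto)

lemma uminus_zero_mat'[simp]: "- (0\<^sub>m n m :: 'a::group_add mat) = 0\<^sub>m n m"
  by (rule eq_matI, auto)

lemma uminus_mat_fb:
  assumes "A \<in> carrier_mat h h" "B \<in> carrier_mat h h" "C \<in> carrier_mat h h" "D \<in> carrier_mat h h"
  shows "- four_block_mat A B C D = four_block_mat (- A) (- B) (- C) (- D)"
  by (rule eq_matI, insert assms, auto)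

lemma Imat_props: "Imat (Suc m) * (Imat (Suc m))\<^sup>T = 1\<^sub>m (2^m) \<and>
   (Imat (Suc m))\<^sup>T = (if Suc m mod 4 = 0 \<or> Suc m mod 4 = 1 then Imat (Suc m) else - Imat (Suc m))"
proof (induction m)
  case (Suc m)
  define A where "A = Imat (Suc m)"
  have A: "A \<in> carrier_mat (2^m) (2^m)" using Imat_carrier[of "Suc m"] by (simp add: A_def)
  have AA: "A * A\<^sup>T = 1\<^sub>m (2^m)" using Suc.IH[THEN conjunct1] unfolding A_def .
  have AT: "A\<^sup>T = (if Suc m mod 4 = 0 \<or> Suc m mod 4 = 1 then A else - A)" using Suc.IH[THEN conjunct2] unfolding A_def .
  show ?case
  proof (cases "even m")
    case True
    hence I: "Imat (Suc (Suc m)) = four_block_mat (0\<^sub>m (2^m) (2^m)) A (- A) (0\<^sub>m (2^m) (2^m))"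
      by (simp add: A_def)
    have IT: "(Imat (Suc (Suc m)))\<^sup>T = four_block_mat (0\<^sub>m (2^m) (2^m)) (- A\<^sup>T) A\<^sup>T (0\<^sub>m (2^m) (2^m))"
      unfolding I by (subst transpose_fb[where h="2^m"], insert A, auto simp: transpose_uminus)
    have "Imat (Suc (Suc m)) * (Imat (Suc (Suc m)))\<^sup>T = four_block_mat (1\<^sub>m (2^m)) (0\<^sub>m (2^m) (2^m)) (0\<^sub>m (2^m) (2^m)) (1\<^sub>m (2^m))"
      unfolding IT unfolding I
      by (subst mult_fb[where h="2^m"], insert A AA, auto)
    hence 1: "Imat (Suc (Suc m)) * (Imat (Suc (Suc m)))\<^sup>T = 1\<^sub>m (2^Suc m)" unfolding pow_suc_split four_block_one_mat .
    have 2: "(Imat (Suc (Suc m)))\<^sup>T = (if Suc (Suc m) mod 4 = 0 \<or> Suc (Suc m) mod 4 = 1 then Imat (Suc (Suc m)) else - Imat (Suc (Suc m)))"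
    proof (cases "Suc (Suc m) mod 4 = 0")
      case True
      hence "\<not> (Suc m mod 4 = 0 \<or> Suc m mod 4 = 1)" by presburger
      hence "A\<^sup>T = - A" using AT by simp
      thus ?thesis unfolding IT unfolding I using True by simp
    next
      case False
      hence "Suc m mod 4 = 0 \<or> Suc m mod 4 = 1" "Suc (Suc m) mod 4 \<noteq> 1" using \<open>even m\<close> by presburger+
      hence "A\<^sup>T = A" "Suc (Suc m) mod 4 \<noteq> 1" using AT by simp_all
      thus ?thesis unfolding IT unfolding I using False A
        by (simp, subst uminus_mat_fb, auto)
    qed
    show ?thesis using 1 2 by simp
  next
    case False
    hence I: "Imat (Suc (Suc m)) = four_block_mat A (0\<^sub>m (2^m) (2^m)) (0\<^sub>m (2^m) (2^m)) (- A)"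
      by (simp add: A_def)
    have IT: "(Imat (Suc (Suc m)))\<^sup>T = four_block_mat A\<^sup>T (0\<^sub>m (2^m) (2^m)) (0\<^sub>m (2^m) (2^m)) (- A\<^sup>T)"
      unfolding I by (subst transpose_fb[where h="2^m"], insert A, auto simp: transpose_uminus)
    have "Imat (Suc (Suc m)) * (Imat (Suc (Suc m)))\<^sup>T = four_block_mat (1\<^sub>m (2^m)) (0\<^sub>m (2^m) (2^m)) (0\<^sub>m (2^m) (2^m)) (1\<^sub>m (2^m))"
      unfolding IT unfolding I
      by (subst mult_fb[where h="2^m"], insert A AA, auto)
    hence 1: "Imat (Suc (Suc m)) * (Imat (Suc (Suc m)))\<^sup>T = 1\<^sub>m (2^Suc m)" unfolding pow_suc_split four_block_one_mat .
    have 2: "(Imat (Suc (Suc m)))\<^sup>T = (if Suc (Suc m) mod 4 = 0 \<or> Suc (Suc m) mod 4 = 1 then Imat (Suc (Suc m)) else - Imat (Suc (Suc m)))"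
    proof (cases "Suc (Suc m) mod 4 = 1")
      case True
      hence "Suc m mod 4 = 0 \<or> Suc m mod 4 = 1" by presburger
      hence "A\<^sup>T = A" using AT by simp
      thus ?thesis unfolding IT unfolding I using True by simp
    next
      case False
      hence "\<not> (Suc m mod 4 = 0 \<or> Suc m mod 4 = 1)" "Suc (Suc m) mod 4 \<noteq> 0" using \<open>odd m\<close> by presburger+
      hence "A\<^sup>T = - A" "Suc (Suc m) mod 4 \<noteq> 0" using AT by simp_all
      thus ?thesis unfolding IT unfolding I using False A
        by (simp, subst uminus_mat_fb, auto)
    qed
    show ?thesis using 1 2 by simp
  qed
qed simp

lemma dim_Imat[simp]: "dim_row (Imat n) = 2^(n-1)" "dim_col (Imat n) = 2^(n-1)"
  using Imat_carrier[of n] by auto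

lemma Imat_TI: "(Imat (Suc m))\<^sup>T * Imat (Suc m) = 1\<^sub>m (2^m)"
proof -
  have c: "Imat (Suc m) \<in> carrier_mat (2^m) (2^m)" using Imat_carrier[of "Suc m"] by simp
  have 1: "Imat (Suc m) * (Imat (Suc m))\<^sup>T = 1\<^sub>m (2^m)" using Imat_props by blast
  have "(Imat (Suc m))\<^sup>T = Imat (Suc m) \<or> (Imat (Suc m))\<^sup>T = - Imat (Suc m)"
    using Imat_props[of m] by metis
  thus ?thesis
  proof
    assume "(Imat (Suc m))\<^sup>T = Imat (Suc m)" thus ?thesis using 1 by simp
  next
    assume h: "(Imat (Suc m))\<^sup>T = - Imat (Suc m)"
    have "(Imat (Suc m))\<^sup>T * Imat (Suc m) = Imat (Suc m) * (Imat (Suc m))\<^sup>T"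
      unfolding h by simp
    thus ?thesis using 1 by simp
  qed
qed

lemma smult1_left: "A \<in> carrier_mat h k \<Longrightarrow> (c \<cdot>\<^sub>m 1\<^sub>m h) * A = (c::'a::comm_ring_1) \<cdot>\<^sub>m A"
  by (subst mult_smult_assoc_mat[of _ h h], auto)

lemma smult1_right: "A \<in> carrier_mat k h \<Longrightarrow> A * (c \<cdot>\<^sub>m 1\<^sub>m h) = (c::'a::comm_ring_1) \<cdot>\<^sub>m A"
  by (subst mult_smult_distrib[of _ k h], auto)

lemma smult1_T[simp]: "(c \<cdot>\<^sub>m 1\<^sub>m h)\<^sup>T = c \<cdot>\<^sub>m 1\<^sub>m h"
  by (rule eq_matI, auto)

lemma alpha_carrier: "alpha n a b \<in> carrier_mat (2^(n-1)) (2^(n-1))"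
proof (induction n a b rule: alpha.induct)
  case (3 m a b)
  thus ?case by (simp only: alpha.simps diff_Suc_1 pow_suc_split, auto)
qed auto

lemma dim_alpha[simp]: "dim_row (alpha n a b) = 2^(n-1)" "dim_col (alpha n a b) = 2^(n-1)"
  using alpha_carrier[of n a b] by auto

lemma alpha_SS: "alpha (Suc (Suc m)) a b =
     four_block_mat (a 0 \<cdot>\<^sub>m 1\<^sub>m (2^m)) (alpha (Suc m) (a \<circ> Suc) (b \<circ> Suc))
       (- transpose_mat (alpha (Suc m) (b \<circ> Suc) (a \<circ> Suc))) (b 0 \<cdot>\<^sub>m 1\<^sub>m (2^m))"
  by simp

lemma block_scalar:
  fixes A B :: "'a::comm_ring_1 mat"
  assumes A: "A \<in> carrier_mat h h" and B: "B \<in> carrier_mat h h"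
    and AB: "A * B\<^sup>T = d \<cdot>\<^sub>m 1\<^sub>m h" "B\<^sup>T * A = d \<cdot>\<^sub>m 1\<^sub>m h"
  shows "four_block_mat (a \<cdot>\<^sub>m 1\<^sub>m h) A (- B\<^sup>T) (b \<cdot>\<^sub>m 1\<^sub>m h) *
     four_block_mat (b \<cdot>\<^sub>m 1\<^sub>m h) (- A) B\<^sup>T (a \<cdot>\<^sub>m 1\<^sub>m h) = (a * b + d) \<cdot>\<^sub>m 1\<^sub>m (h + h)"
    "four_block_mat (b \<cdot>\<^sub>m 1\<^sub>m h) (- A) B\<^sup>T (a \<cdot>\<^sub>m 1\<^sub>m h) *
     four_block_mat (a \<cdot>\<^sub>m 1\<^sub>m h) A (- B\<^sup>T) (b \<cdot>\<^sub>m 1\<^sub>m h) = (a * b + d) \<cdot>\<^sub>m 1\<^sub>m (h + h)"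
proof -
  have BT: "B\<^sup>T \<in> carrier_mat h h" using B by simp
  let ?a = "a \<cdot>\<^sub>m 1\<^sub>m h" and ?b = "b \<cdot>\<^sub>m 1\<^sub>m h"
  have ab: "?a * ?b = (a * b) \<cdot>\<^sub>m 1\<^sub>m h" "?b * ?a = (a * b) \<cdot>\<^sub>m 1\<^sub>m h"
    by (rule eq_matI, auto simp: smult1_left[of _ h h])+
  have m1: "four_block_mat ?a A (- B\<^sup>T) ?b * four_block_mat ?b (- A) B\<^sup>T ?a =
     four_block_mat (?a * ?b + A * B\<^sup>T) (?a * - A + A * ?a) (- B\<^sup>T * ?b + ?b * B\<^sup>T) (- B\<^sup>T * - A + ?b * ?a)"
    by (rule mult_fb[where h=h], insert A BT, auto)
  have m2: "four_block_mat ?b (- A) B\<^sup>T ?a * four_block_mat ?a A (- B\<^sup>T) ?b =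
     four_block_mat (?b * ?a + - A * - B\<^sup>T) (?b * A + - A * ?b) (B\<^sup>T * ?a + ?a * - B\<^sup>T) (B\<^sup>T * A + ?a * ?b)"
    by (rule mult_fb[where h=h], insert A BT, auto)
  have s: "?a * - A = a \<cdot>\<^sub>m (- A)" "A * ?a = a \<cdot>\<^sub>m A" "- B\<^sup>T * ?b = b \<cdot>\<^sub>m (- B\<^sup>T)" "?b * B\<^sup>T = b \<cdot>\<^sub>m B\<^sup>T"
    "?b * A = b \<cdot>\<^sub>m A" "- A * ?b = b \<cdot>\<^sub>m (- A)" "B\<^sup>T * ?a = a \<cdot>\<^sub>m B\<^sup>T" "?a * - B\<^sup>T = a \<cdot>\<^sub>m (- B\<^sup>T)"
    using A BT by (auto simp only: smult1_left smult1_right uminus_carrier_iff_mat)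
  have n: "- B\<^sup>T * - A = B\<^sup>T * A" "- A * - B\<^sup>T = A * B\<^sup>T" using A BT by auto
  show "four_block_mat ?a A (- B\<^sup>T) ?b * four_block_mat ?b (- A) B\<^sup>T ?a = (a * b + d) \<cdot>\<^sub>m 1\<^sub>m (h + h)"
    unfolding m1 s n ab AB
    by (rule eq_matI, insert A BT, auto simp: algebra_simps)
  show "four_block_mat ?b (- A) B\<^sup>T ?a * four_block_mat ?a A (- B\<^sup>T) ?b = (a * b + d) \<cdot>\<^sub>m 1\<^sub>m (h + h)"
    unfolding m2 s n ab AB
    by (rule eq_matI, insert A BT, auto simp: algebra_simps)
qed

lemma suslin: "alpha (Suc m) a b * (alpha (Suc m) b a)\<^sup>T = (\<Sum>i<Suc m. a i * b i) \<cdot>\<^sub>m 1\<^sub>m (2^m)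
  \<and> (alpha (Suc m) b a)\<^sup>T * alpha (Suc m) a b = (\<Sum>i<Suc m. a i * b i) \<cdot>\<^sub>m 1\<^sub>m (2^m)"
proof (induction m arbitrary: a b)
  case 0
  show ?case by (intro conjI; rule eq_matI; simp add: scalar_prod_def)
next
  case (Suc m)
  define A where "A = alpha (Suc m) (a \<circ> Suc) (b \<circ> Suc)"
  define B where "B = alpha (Suc m) (b \<circ> Suc) (a \<circ> Suc)"
  define d where "d = (\<Sum>i<Suc m. (a \<circ> Suc) i * (b \<circ> Suc) i)"
  have A: "A \<in> carrier_mat (2^m) (2^m)" unfolding A_def using alpha_carrier[of "Suc m"] by simp
  have B: "B \<in> carrier_mat (2^m) (2^m)" unfolding B_def using alpha_carrier[of "Suc m"] by simp
  have AB: "A * B\<^sup>T = d \<cdot>\<^sub>m 1\<^sub>m (2^m)" "B\<^sup>T * A = d \<cdot>\<^sub>m 1\<^sub>m (2^m)"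
    unfolding A_def B_def d_def by (rule conjunct1[OF Suc.IH], rule conjunct2[OF Suc.IH])
  have sum: "(\<Sum>i<Suc (Suc m). a i * b i) = a 0 * b 0 + d"
    unfolding d_def by (subst sum.lessThan_Suc_shift, simp)
  have e1: "alpha (Suc (Suc m)) a b = four_block_mat (a 0 \<cdot>\<^sub>m 1\<^sub>m (2^m)) A (- B\<^sup>T) (b 0 \<cdot>\<^sub>m 1\<^sub>m (2^m))"
    unfolding A_def B_def by simp
  have e2: "(alpha (Suc (Suc m)) b a)\<^sup>T = four_block_mat (b 0 \<cdot>\<^sub>m 1\<^sub>m (2^m)) (- A) B\<^sup>T (a 0 \<cdot>\<^sub>m 1\<^sub>m (2^m))"
    unfolding A_def B_def alpha_SS
    by (subst transpose_fb[where h="2^m"], insert A B, auto simp: A_def B_def transpose_uminus)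
  show ?case unfolding sum e1 e2 pow_suc_split
    using block_scalar[OF A B AB, where a="a 0" and b="b 0"] by simp
qed

lemma dim_ofm[simp]: "dim_row (ofm A) = dim_row A" "dim_col (ofm A) = dim_col A"
  unfolding ofm_def by auto
lemma ofm_carrier[simp]: "(ofm A \<in> carrier_mat n m) = (A \<in> carrier_mat n m)"
  unfolding ofm_def by simp
lemma ofm_fb: "A \<in> carrier_mat h h \<Longrightarrow> B \<in> carrier_mat h h \<Longrightarrow> C \<in> carrier_mat h h \<Longrightarrow> D \<in> carrier_mat h h \<Longrightarrow>
  ofm (four_block_mat A B C D) = four_block_mat (ofm A) (ofm B) (ofm C) (ofm D)"
  unfolding ofm_def by (rule map_four_block_mat)
lemma ofm_uminus[simp]: "ofm (- A) = - ofm A"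
  unfolding ofm_def by (rule eq_matI, auto)
lemma ofm_zero[simp]: "ofm (0\<^sub>m n m) = 0\<^sub>m n m"
  unfolding ofm_def by (rule eq_matI, auto)
lemma ofm_one[simp]: "ofm (1\<^sub>m n) = 1\<^sub>m n"
  unfolding ofm_def by (rule eq_matI, auto)
lemma ofm_T: "ofm (A\<^sup>T) = (ofm A)\<^sup>T"
  unfolding ofm_def by (rule eq_matI, auto)
lemma ofm_mult: "A \<in> carrier_mat n k \<Longrightarrow> B \<in> carrier_mat k m \<Longrightarrow> ofm (A * B) = ofm A * ofm B"
  unfolding ofm_def by (rule of_int_hom.mat_hom_mult)

lemma smult_uminus_mat[simp]: "(c::'a::comm_ring_1) \<cdot>\<^sub>m (- X) = - (c \<cdot>\<^sub>m X)"
  by (rule eq_matI, auto)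

lemma conj_T:
  fixes J X :: "'a::comm_ring_1 mat"
  assumes J: "J \<in> carrier_mat h h" and X: "X \<in> carrier_mat h h" and e: "J\<^sup>T * (X * J) = Y"
  shows "J\<^sup>T * (X\<^sup>T * J) = Y\<^sup>T"
proof -
  have "Y\<^sup>T = (X * J)\<^sup>T * (J\<^sup>T)\<^sup>T" unfolding e[symmetric]
    by (rule transpose_mult[of _ h h], insert J X, auto)
  also have "(X * J)\<^sup>T = J\<^sup>T * X\<^sup>T" by (rule transpose_mult[of _ h h], insert J X, auto)
  also have "J\<^sup>T * X\<^sup>T * (J\<^sup>T)\<^sup>T = J\<^sup>T * X\<^sup>T * J" by simp
  also have "\<dots> = J\<^sup>T * (X\<^sup>T * J)" using J X by (simp add: assoc_mult_mat[of _ h h _ h _ h])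
  finally show ?thesis by simp
qed

lemma alpha_I: "(ofm (Imat (Suc m)))\<^sup>T * (alpha (Suc m) a b * ofm (Imat (Suc m))) =
   (if even (Suc m) then alpha (Suc m) b a else (alpha (Suc m) a b)\<^sup>T)"
proof (induction m arbitrary: a b)
  case 0
  show ?case by (rule eq_matI, auto simp: ofm_def scalar_prod_def)
next
  case (Suc m)
  define A where "A = alpha (Suc m) (a \<circ> Suc) (b \<circ> Suc)"
  define B where "B = alpha (Suc m) (b \<circ> Suc) (a \<circ> Suc)"
  define J where "J = (ofm (Imat (Suc m)) :: 'a mat)"
  have A: "A \<in> carrier_mat (2^m) (2^m)" unfolding A_def using alpha_carrier[of "Suc m"] by simp
  have B: "B \<in> carrier_mat (2^m) (2^m)" unfolding B_def using alpha_carrier[of "Suc m"] by simp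
  have J: "J \<in> carrier_mat (2^m) (2^m)" unfolding J_def using Imat_carrier[of "Suc m"] by simp
  have "ofm ((Imat (Suc m))\<^sup>T * Imat (Suc m)) = ofm ((Imat (Suc m))\<^sup>T) * (ofm (Imat (Suc m)) :: 'a mat)"
    by (rule ofm_mult[of _ "2^m" "2^m"], insert Imat_carrier[of "Suc m"], auto)
  hence JJ: "J\<^sup>T * J = 1\<^sub>m (2^m)" unfolding J_def Imat_TI ofm_one ofm_T by simp
  have IHA: "J\<^sup>T * (A * J) = (if even (Suc m) then B else A\<^sup>T)"
    unfolding A_def B_def J_def by (rule Suc.IH)
  have IHB: "J\<^sup>T * (B * J) = (if even (Suc m) then A else B\<^sup>T)"
    unfolding A_def B_def J_def by (rule Suc.IH)
  have e1: "alpha (Suc (Suc m)) a b = four_block_mat (a 0 \<cdot>\<^sub>m 1\<^sub>m (2^m)) A (- B\<^sup>T) (b 0 \<cdot>\<^sub>m 1\<^sub>m (2^m))"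
    unfolding A_def B_def by simp
  have e2: "alpha (Suc (Suc m)) b a = four_block_mat (b 0 \<cdot>\<^sub>m 1\<^sub>m (2^m)) B (- A\<^sup>T) (a 0 \<cdot>\<^sub>m 1\<^sub>m (2^m))"
    unfolding A_def B_def by simp
  have JT: "J\<^sup>T \<in> carrier_mat (2^m) (2^m)" using J by simp
  have BT: "B\<^sup>T \<in> carrier_mat (2^m) (2^m)" using B by simp
  have AT: "A\<^sup>T \<in> carrier_mat (2^m) (2^m)" using A by simp
  have AJ: "A * J \<in> carrier_mat (2^m) (2^m)" "B\<^sup>T * J \<in> carrier_mat (2^m) (2^m)" using A B J by auto
  let ?a = "a 0 \<cdot>\<^sub>m 1\<^sub>m (2^m)" and ?b = "b 0 \<cdot>\<^sub>m 1\<^sub>m (2^m)" and ?z = "0\<^sub>m (2^m) (2^m) :: 'a mat"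
  show ?case
  proof (cases "even m")
    case True
    have IH2: "J\<^sup>T * (A\<^sup>T * J) = A" "J\<^sup>T * (B\<^sup>T * J) = B"
      using conj_T[OF J A IHA] conj_T[OF J B IHB] True by auto
    have K: "ofm (Imat (Suc (Suc m))) = four_block_mat ?z J (- J) ?z"
      unfolding J_def using True Imat_carrier[of "Suc m"] by (simp, subst ofm_fb[where h="2^m"], auto)
    have KT: "(four_block_mat ?z J (- J) ?z)\<^sup>T = four_block_mat ?z (- J\<^sup>T) J\<^sup>T ?z"
      by (subst transpose_fb[where h="2^m"], insert J, auto simp: transpose_uminus)
    have m1: "four_block_mat ?a A (- B\<^sup>T) ?b * four_block_mat ?z J (- J) ?z =
      four_block_mat (?a * ?z + A * - J) (?a * J + A * ?z) (- B\<^sup>T * ?z + ?b * - J) (- B\<^sup>T * J + ?b * ?z)"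
      by (rule mult_fb, insert A B J, auto)
    have m1': "four_block_mat ?a A (- B\<^sup>T) ?b * four_block_mat ?z J (- J) ?z =
      four_block_mat (- (A * J)) (a 0 \<cdot>\<^sub>m J) (- (b 0 \<cdot>\<^sub>m J)) (- (B\<^sup>T * J))"
      unfolding m1 using A B J by (simp add: smult1_left[OF J] smult1_left[OF uminus_carrier_mat[OF J]])
    have m2: "four_block_mat ?z (- J\<^sup>T) J\<^sup>T ?z * four_block_mat (- (A * J)) (a 0 \<cdot>\<^sub>m J) (- (b 0 \<cdot>\<^sub>m J)) (- (B\<^sup>T * J))
      = four_block_mat (?z * - (A * J) + - J\<^sup>T * - (b 0 \<cdot>\<^sub>m J)) (?z * (a 0 \<cdot>\<^sub>m J) + - J\<^sup>T * - (B\<^sup>T * J))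
          (J\<^sup>T * - (A * J) + ?z * - (b 0 \<cdot>\<^sub>m J)) (J\<^sup>T * (a 0 \<cdot>\<^sub>m J) + ?z * - (B\<^sup>T * J))"
      by (rule mult_fb, insert A B J, auto)
    have m2': "four_block_mat ?z (- J\<^sup>T) J\<^sup>T ?z * four_block_mat (- (A * J)) (a 0 \<cdot>\<^sub>m J) (- (b 0 \<cdot>\<^sub>m J)) (- (B\<^sup>T * J))
      = four_block_mat ?b B (- A\<^sup>T) ?a"
      unfolding m2 using A B J True IH2 IHA JJ by (simp add: mult_smult_distrib[OF JT J])
    show ?thesis unfolding e1 e2 K KT m1' m2' using True by simp
  next
    case False
    have IH2: "J\<^sup>T * (B\<^sup>T * J) = A\<^sup>T"
      using conj_T[OF J B IHB] False by auto
    have IHA': "J\<^sup>T * (A * J) = B" using IHA False by auto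
    have K: "ofm (Imat (Suc (Suc m))) = four_block_mat J ?z ?z (- J)"
      unfolding J_def using False Imat_carrier[of "Suc m"] by (simp, subst ofm_fb[where h="2^m"], auto)
    have KT: "(four_block_mat J ?z ?z (- J))\<^sup>T = four_block_mat J\<^sup>T ?z ?z (- J\<^sup>T)"
      by (subst transpose_fb[where h="2^m"], insert J, auto simp: transpose_uminus)
    have m1: "four_block_mat ?a A (- B\<^sup>T) ?b * four_block_mat J ?z ?z (- J) =
      four_block_mat (?a * J + A * ?z) (?a * ?z + A * - J) (- B\<^sup>T * J + ?b * ?z) (- B\<^sup>T * ?z + ?b * - J)"
      by (rule mult_fb, insert A B J, auto)
    have m1': "four_block_mat ?a A (- B\<^sup>T) ?b * four_block_mat J ?z ?z (- J) =
      four_block_mat (a 0 \<cdot>\<^sub>m J) (- (A * J)) (- (B\<^sup>T * J)) (- (b 0 \<cdot>\<^sub>m J))"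
      unfolding m1 using A B J by (simp add: smult1_left[OF J] smult1_left[OF uminus_carrier_mat[OF J]])
    have m2: "four_block_mat J\<^sup>T ?z ?z (- J\<^sup>T) * four_block_mat (a 0 \<cdot>\<^sub>m J) (- (A * J)) (- (B\<^sup>T * J)) (- (b 0 \<cdot>\<^sub>m J))
      = four_block_mat (J\<^sup>T * (a 0 \<cdot>\<^sub>m J) + ?z * - (B\<^sup>T * J)) (J\<^sup>T * - (A * J) + ?z * - (b 0 \<cdot>\<^sub>m J))
          (?z * (a 0 \<cdot>\<^sub>m J) + - J\<^sup>T * - (B\<^sup>T * J)) (?z * - (A * J) + - J\<^sup>T * - (b 0 \<cdot>\<^sub>m J))"
      by (rule mult_fb, insert A B J, auto)
    have m2': "four_block_mat J\<^sup>T ?z ?z (- J\<^sup>T) * four_block_mat (a 0 \<cdot>\<^sub>m J) (- (A * J)) (- (B\<^sup>T * J)) (- (b 0 \<cdot>\<^sub>m J))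
      = four_block_mat ?a (- B) A\<^sup>T ?b"
      unfolding m2 using A B J IH2 IHA' JJ by (simp add: mult_smult_distrib[OF JT J])
    have aT: "(four_block_mat ?a A (- B\<^sup>T) ?b)\<^sup>T = four_block_mat ?a (- B) A\<^sup>T ?b"
      by (subst transpose_fb[where h="2^m"], insert A B, auto simp: transpose_uminus)
    show ?thesis unfolding e1 K KT m1' m2' aT using False by simp
  qed
qed

definition cj :: "'a::comm_ring_1 mat \<Rightarrow> 'a mat \<Rightarrow> 'a mat" where "cj P X = P\<^sup>T * (X * P)"

lemma cj_mult: assumes "P \<in> carrier_mat N N" "Q \<in> carrier_mat N N" "X \<in> carrier_mat N N"
  shows "cj (P * Q) X = cj Q (cj P X)"
  unfolding cj_def using assms
  by (simp add: transpose_mult[of _ N N] assoc_mult_mat[of _ N N _ N _ N])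

lemma cj_diag: fixes A D X R :: "'a::comm_ring_1 mat"
  assumes c: "A \<in> carrier_mat h h" "D \<in> carrier_mat h h" "X \<in> carrier_mat h h" "R \<in> carrier_mat h h"
  shows "cj (four_block_mat A (0\<^sub>m h h) (0\<^sub>m h h) D) (four_block_mat X (0\<^sub>m h h) (0\<^sub>m h h) R)
   = four_block_mat (A\<^sup>T * (X * A)) (0\<^sub>m h h) (0\<^sub>m h h) (D\<^sup>T * (R * D))"
proof -
  let ?z = "0\<^sub>m h h :: 'a mat"
  have T: "(four_block_mat A ?z ?z D)\<^sup>T = four_block_mat A\<^sup>T ?z ?z D\<^sup>T"
    by (subst transpose_fb[where h=h], insert c, auto)
  have m1: "four_block_mat X ?z ?z R * four_block_mat A ?z ?z D = four_block_mat (X * A + ?z * ?z) (X * ?z + ?z * D) (?z * A + R * ?z) (?z * ?z + R * D)"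
    by (rule mult_fb, insert c, auto)
  have m1': "four_block_mat X ?z ?z R * four_block_mat A ?z ?z D = four_block_mat (X * A) ?z ?z (R * D)"
    unfolding m1 using c by simp
  have m2: "four_block_mat A\<^sup>T ?z ?z D\<^sup>T * four_block_mat (X * A) ?z ?z (R * D) = four_block_mat (A\<^sup>T * (X * A) + ?z * ?z) (A\<^sup>T * ?z + ?z * (R * D)) (?z * (X * A) + D\<^sup>T * ?z) (?z * ?z + D\<^sup>T * (R * D))"
    by (rule mult_fb, insert c, auto)
  show ?thesis unfolding cj_def T m1' m2 using c by simp
qed

lemma cj_step1: fixes J :: "'a::comm_ring_1 mat"
  assumes J: "J \<in> carrier_mat h h" and JJ: "J * J\<^sup>T = 1\<^sub>m h"
  shows "cj (four_block_mat (1\<^sub>m h) (0\<^sub>m h h) (0\<^sub>m h h) J\<^sup>T) (four_block_mat (0\<^sub>m h h) J (- J) (0\<^sub>m h h))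
   = four_block_mat (0\<^sub>m h h) (1\<^sub>m h) (- (J * J)) (0\<^sub>m h h)"
proof -
  let ?z = "0\<^sub>m h h :: 'a mat" and ?o = "1\<^sub>m h :: 'a mat"
  have T: "(four_block_mat ?o ?z ?z J\<^sup>T)\<^sup>T = four_block_mat ?o ?z ?z J"
    by (subst transpose_fb[where h=h], insert J, auto)
  have m1: "four_block_mat ?z J (- J) ?z * four_block_mat ?o ?z ?z J\<^sup>T = four_block_mat (?z * ?o + J * ?z) (?z * ?z + J * J\<^sup>T) (- J * ?o + ?z * ?z) (- J * ?z + ?z * J\<^sup>T)"
    by (rule mult_fb, insert J, auto)
  have m1': "four_block_mat ?z J (- J) ?z * four_block_mat ?o ?z ?z J\<^sup>T = four_block_mat ?z ?o (- J) ?z"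
    unfolding m1 using J JJ by simp
  have m2: "four_block_mat ?o ?z ?z J * four_block_mat ?z ?o (- J) ?z = four_block_mat (?o * ?z + ?z * - J) (?o * ?o + ?z * ?z) (?z * ?z + J * - J) (?z * ?o + J * ?z)"
    by (rule mult_fb, insert J, auto)
  show ?thesis unfolding cj_def T m1' m2 using J by simp
qed

lemma cj_step2: fixes T C :: "'a::comm_ring_1 mat"
  assumes c: "T \<in> carrier_mat h h" "C \<in> carrier_mat h h"
  shows "cj (four_block_mat (1\<^sub>m h) (0\<^sub>m h h) T (1\<^sub>m h)) (four_block_mat (0\<^sub>m h h) (1\<^sub>m h) C (0\<^sub>m h h))
   = four_block_mat (T + T\<^sup>T * C) (1\<^sub>m h) C (0\<^sub>m h h)"
proof -
  let ?z = "0\<^sub>m h h :: 'a mat" and ?o = "1\<^sub>m h :: 'a mat"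
  have TT: "(four_block_mat ?o ?z T ?o)\<^sup>T = four_block_mat ?o T\<^sup>T ?z ?o"
    by (subst transpose_fb[where h=h], insert c, auto)
  have m1: "four_block_mat ?z ?o C ?z * four_block_mat ?o ?z T ?o = four_block_mat (?z * ?o + ?o * T) (?z * ?z + ?o * ?o) (C * ?o + ?z * T) (C * ?z + ?z * ?o)"
    by (rule mult_fb, insert c, auto)
  have m1': "four_block_mat ?z ?o C ?z * four_block_mat ?o ?z T ?o = four_block_mat T ?o C ?z"
    unfolding m1 using c by simp
  have m2: "four_block_mat ?o T\<^sup>T ?z ?o * four_block_mat T ?o C ?z = four_block_mat (?o * T + T\<^sup>T * C) (?o * ?o + T\<^sup>T * ?z) (?z * T + ?o * C) (?z * ?o + ?o * ?z)"
    by (rule mult_fb, insert c, auto)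
  show ?thesis unfolding cj_def TT m1' m2 using c by simp
qed

lemma cj_step3: fixes Y Q C :: "'a::comm_ring_1 mat"
  assumes c: "Y \<in> carrier_mat h h" "Q \<in> carrier_mat h h" "C \<in> carrier_mat h h"
  shows "cj (four_block_mat (1\<^sub>m h) Y (0\<^sub>m h h) (1\<^sub>m h)) (four_block_mat Q (1\<^sub>m h) C (0\<^sub>m h h))
   = four_block_mat Q (Q * Y + 1\<^sub>m h) (Y\<^sup>T * Q + C) (Y\<^sup>T * (Q * Y + 1\<^sub>m h) + C * Y)"
proof -
  let ?z = "0\<^sub>m h h :: 'a mat" and ?o = "1\<^sub>m h :: 'a mat"
  have TT: "(four_block_mat ?o Y ?z ?o)\<^sup>T = four_block_mat ?o ?z Y\<^sup>T ?o"
    by (subst transpose_fb[where h=h], insert c, auto)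
  have m1: "four_block_mat Q ?o C ?z * four_block_mat ?o Y ?z ?o = four_block_mat (Q * ?o + ?o * ?z) (Q * Y + ?o * ?o) (C * ?o + ?z * ?z) (C * Y + ?z * ?o)"
    by (rule mult_fb, insert c, auto)
  have m1': "four_block_mat Q ?o C ?z * four_block_mat ?o Y ?z ?o = four_block_mat Q (Q * Y + ?o) C (C * Y)"
    unfolding m1 using c by simp
  have m2: "four_block_mat ?o ?z Y\<^sup>T ?o * four_block_mat Q (Q * Y + ?o) C (C * Y) = four_block_mat (?o * Q + ?z * C) (?o * (Q * Y + ?o) + ?z * (C * Y)) (Y\<^sup>T * Q + ?o * C) (Y\<^sup>T * (Q * Y + ?o) + ?o * (C * Y))"
    by (rule mult_fb, insert c, auto)
  show ?thesis unfolding cj_def TT m1' m2 using c by simp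
qed

lemma tau_sigma: "tau h + (tau h)\<^sup>T = sigma h" unfolding sigma_def ..
lemma dim_tau[simp]: "dim_row (tau h) = h" "dim_col (tau h) = h" unfolding tau_def by auto
lemma tau_psi: "tau h + (tau h)\<^sup>T * (- 1\<^sub>m h) = psi h"
proof -
  have e: "(tau h)\<^sup>T * (- 1\<^sub>m h) = - (tau h)\<^sup>T" by simp
  show ?thesis unfolding psi_def e by (intro eq_matI, auto)
qed

lemma tau_psi': "tau h + - (tau h)\<^sup>T = psi h"
  unfolding psi_def by (intro eq_matI, auto)

lemma neg_one_add_one[simp]: "- 1\<^sub>m h + 1\<^sub>m h = (0\<^sub>m h h :: 'a::comm_ring_1 mat)"
  by (rule eq_matI, auto)
lemma one_add_neg_one[simp]: "1\<^sub>m h + - 1\<^sub>m h = (0\<^sub>m h h :: 'a::comm_ring_1 mat)"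
  by (rule eq_matI, auto)

lemma Emat_even: assumes n: "n = Suc (Suc (Suc m))" and ev: "even n"
  shows "cj (Emat n) (Imat n) = (if n mod 4 = 0 then sigma (2^(n-1)) else psi (2^(n-1)))"
proof -
  define h where "h = (2::nat)^Suc m"
  define J where "J = Imat (Suc (Suc m))"
  have hev: "even h" unfolding h_def by simp
  have hn: "2^(n-1) = h + h" unfolding h_def n by simp
  have J: "J \<in> carrier_mat h h" unfolding J_def h_def using Imat_carrier[of "Suc (Suc m)"] by simp
  have JJT: "J * J\<^sup>T = 1\<^sub>m h" unfolding J_def h_def using Imat_props[of "Suc m", THEN conjunct1] .
  have JT: "J\<^sup>T = (if Suc (Suc m) mod 4 = 0 \<or> Suc (Suc m) mod 4 = 1 then J else - J)"
    unfolding J_def using Imat_props[of "Suc m", THEN conjunct2] .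
  have I: "Imat n = four_block_mat (0\<^sub>m h h) J (- J) (0\<^sub>m h h)"
    unfolding n J_def h_def using ev n by simp
  let ?z = "0\<^sub>m h h :: int mat" and ?o = "1\<^sub>m h :: int mat"
  have cD1: "four_block_mat ?o ?z ?z J\<^sup>T \<in> carrier_mat (h+h) (h+h)" using J by auto
  have cL: "four_block_mat ?o ?z (tau h) ?o \<in> carrier_mat (h+h) (h+h)" by auto
  have cI: "Imat n \<in> carrier_mat (h+h) (h+h)" unfolding I using J by auto
  show ?thesis
  proof (cases "n mod 4 = 0")
    case True
    have "\<not> (Suc (Suc m) mod 4 = 0 \<or> Suc (Suc m) mod 4 = 1)" using True n by presburger
    hence JT': "J\<^sup>T = - J" using JT by simp
    have JJ: "- (J * J) = ?o" using JJT J unfolding JT' by simp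
    have E: "Emat n = four_block_mat ?o ?z ?z J\<^sup>T * four_block_mat ?o ?z (tau h) ?o
          * four_block_mat ?o (- sigma h) ?z ?o * four_block_mat ?o ?z ?z (psi h)"
      unfolding n h_def J_def using True n by (simp add: Let_def blk_diag_def blk_lower_def blk_upper_def)
    have s1: "cj (four_block_mat ?o ?z ?z J\<^sup>T) (Imat n) = four_block_mat ?z ?o ?o ?z"
      unfolding I cj_step1[OF J JJT] JJ ..
    have s2: "cj (four_block_mat ?o ?z (tau h) ?o) (four_block_mat ?z ?o ?o ?z) = four_block_mat (sigma h) ?o ?o ?z"
      using cj_step2[of "tau h" h "?o"] by (simp add: tau_sigma)
    have s3: "cj (four_block_mat ?o (- sigma h) ?z ?o) (four_block_mat (sigma h) ?o ?o ?z) = four_block_mat (sigma h) ?z ?z (- sigma h)"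
      using cj_step3[of "- sigma h" h "sigma h" "?o"] sigma_sq[OF hev]
      by (simp add: transpose_uminus sigma_T)
    have s4: "cj (four_block_mat ?o ?z ?z (psi h)) (four_block_mat (sigma h) ?z ?z (- sigma h)) = sigma (h + h)"
      using cj_diag[of "?o" h "psi h" "sigma h" "- sigma h"] psi_sigma_psi[OF hev] sigma_block[OF hev]
      by (simp add: psi_T)
    have cU: "four_block_mat ?o (- sigma h) ?z ?o \<in> carrier_mat (h+h) (h+h)" by auto
    have cD2: "four_block_mat ?o ?z ?z (psi h) \<in> carrier_mat (h+h) (h+h)" by auto
    have "cj (Emat n) (Imat n) = cj (four_block_mat ?o ?z ?z (psi h)) (cj (four_block_mat ?o ?z ?z J\<^sup>T * four_block_mat ?o ?z (tau h) ?o
          * four_block_mat ?o (- sigma h) ?z ?o) (Imat n))"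
      unfolding E by (rule cj_mult[OF mult_carrier_mat[OF mult_carrier_mat[OF cD1 cL] cU] cD2 cI])
    also have "cj (four_block_mat ?o ?z ?z J\<^sup>T * four_block_mat ?o ?z (tau h) ?o
          * four_block_mat ?o (- sigma h) ?z ?o) (Imat n) = cj (four_block_mat ?o (- sigma h) ?z ?o)
           (cj (four_block_mat ?o ?z ?z J\<^sup>T * four_block_mat ?o ?z (tau h) ?o) (Imat n))"
      by (rule cj_mult[OF mult_carrier_mat[OF cD1 cL] cU cI])
    also have "cj (four_block_mat ?o ?z ?z J\<^sup>T * four_block_mat ?o ?z (tau h) ?o) (Imat n)
       = cj (four_block_mat ?o ?z (tau h) ?o) (cj (four_block_mat ?o ?z ?z J\<^sup>T) (Imat n))"
      by (rule cj_mult[OF cD1 cL cI])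
    finally show ?thesis unfolding s1 s2 s3 s4 hn using True by simp
  next
    case False
    have "Suc (Suc m) mod 4 = 1" using False n ev by presburger
    hence JT': "J\<^sup>T = J" using JT by simp
    have JJ: "- (J * J) = - ?o" using JJT J unfolding JT' by simp
    have E: "Emat n = four_block_mat ?o ?z ?z J\<^sup>T * four_block_mat ?o ?z (tau h) ?o
          * four_block_mat ?o (psi h) ?z ?o * four_block_mat ?o ?z ?z (sigma h)"
    proof -
      have "n mod 4 = 2" using False ev by presburger
      thus ?thesis unfolding n h_def J_def by (simp add: Let_def blk_diag_def blk_lower_def blk_upper_def)
    qed
    have s1: "cj (four_block_mat ?o ?z ?z J\<^sup>T) (Imat n) = four_block_mat ?z ?o (- ?o) ?z"
      unfolding I cj_step1[OF J JJT] JJ ..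
    have s2: "cj (four_block_mat ?o ?z (tau h) ?o) (four_block_mat ?z ?o (- ?o) ?z) = four_block_mat (psi h) ?o (- ?o) ?z"
      using cj_step2[of "tau h" h "- ?o"] by (simp add: tau_psi')
    have s3: "cj (four_block_mat ?o (psi h) ?z ?o) (four_block_mat (psi h) ?o (- ?o) ?z) = four_block_mat (psi h) ?z ?z (- psi h)"
      using cj_step3[of "psi h" h "psi h" "- ?o"] psi_sq[OF hev]
      by (simp add: psi_T)
    have s4: "cj (four_block_mat ?o ?z ?z (sigma h)) (four_block_mat (psi h) ?z ?z (- psi h)) = psi (h + h)"
      using cj_diag[of "?o" h "sigma h" "psi h" "- psi h"] sigma_psi_sigma[OF hev] psi_block[OF hev]
      by (simp add: sigma_T)
    have cU: "four_block_mat ?o (psi h) ?z ?o \<in> carrier_mat (h+h) (h+h)" by auto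
    have cD2: "four_block_mat ?o ?z ?z (sigma h) \<in> carrier_mat (h+h) (h+h)" by auto
    have "cj (Emat n) (Imat n) = cj (four_block_mat ?o ?z ?z (sigma h)) (cj (four_block_mat ?o ?z ?z J\<^sup>T * four_block_mat ?o ?z (tau h) ?o
          * four_block_mat ?o (psi h) ?z ?o) (Imat n))"
      unfolding E by (rule cj_mult[OF mult_carrier_mat[OF mult_carrier_mat[OF cD1 cL] cU] cD2 cI])
    also have "cj (four_block_mat ?o ?z ?z J\<^sup>T * four_block_mat ?o ?z (tau h) ?o
          * four_block_mat ?o (psi h) ?z ?o) (Imat n) = cj (four_block_mat ?o (psi h) ?z ?o)
           (cj (four_block_mat ?o ?z ?z J\<^sup>T * four_block_mat ?o ?z (tau h) ?o) (Imat n))"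
      by (rule cj_mult[OF mult_carrier_mat[OF cD1 cL] cU cI])
    also have "cj (four_block_mat ?o ?z ?z J\<^sup>T * four_block_mat ?o ?z (tau h) ?o) (Imat n)
       = cj (four_block_mat ?o ?z (tau h) ?o) (cj (four_block_mat ?o ?z ?z J\<^sup>T) (Imat n))"
      by (rule cj_mult[OF cD1 cL cI])
    finally show ?thesis unfolding s1 s2 s3 s4 hn using False by simp
  qed
qed

lemma Emat_carrier_SSS: assumes E': "Emat (Suc (Suc m)) \<in> carrier_mat (2^Suc m) (2^Suc m) \<or> even (Suc (Suc (Suc m)))"
  shows "Emat (Suc (Suc (Suc m))) \<in> carrier_mat (2^Suc (Suc m)) (2^Suc (Suc m))"
proof -
  define h where "h = (2::nat)^Suc m"
  have hn: "2^(Suc (Suc m)) = h + h" unfolding h_def by simp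
  have J: "Imat (Suc (Suc m)) \<in> carrier_mat h h" using Imat_carrier[of "Suc (Suc m)"] unfolding h_def by simp
  show ?thesis
  proof (cases "even (Suc (Suc (Suc m)))")
    case True
    hence "Suc (Suc (Suc m)) mod 4 = 0 \<or> Suc (Suc (Suc m)) mod 4 = 2" by presburger
    thus ?thesis unfolding hn
      using J unfolding Emat.simps Let_def h_def[symmetric]
      by (auto simp: blk_diag_def blk_lower_def blk_upper_def simp del: Imat.simps intro!: mult_carrier_mat)
  next
    case False
    hence E: "Emat (Suc (Suc m)) \<in> carrier_mat h h" using E' unfolding h_def by simp
    from False have "Suc (Suc (Suc m)) mod 4 = 1 \<or> Suc (Suc (Suc m)) mod 4 = 3" by presburger
    thus ?thesis unfolding hn
      using E unfolding Emat.simps Let_def h_def[symmetric]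
      by (auto simp: blk_diag_def blk_lower_def blk_upper_def simp del: Imat.simps intro!: mult_carrier_mat)
  qed
qed

lemma Emat_carrier: "Emat n \<in> carrier_mat (2^(n-1)) (2^(n-1))"
proof (induction n rule: less_induct)
  case (less n)
  show ?case
  proof (cases n)
    case (Suc k)
    show ?thesis
    proof (cases k)
      case (Suc k2)
      show ?thesis
      proof (cases k2)
        case (Suc m)
        have "Emat (Suc (Suc m)) \<in> carrier_mat (2^Suc m) (2^Suc m)"
          using less[of "Suc (Suc m)"] \<open>n = Suc k\<close> \<open>k = Suc k2\<close> Suc by simp
        thus ?thesis using Emat_carrier_SSS[of m] \<open>n = Suc k\<close> \<open>k = Suc k2\<close> Suc by simp
      qed (insert \<open>n = Suc k\<close> \<open>k = Suc k2\<close>, simp)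
    qed (insert \<open>n = Suc k\<close>, simp)
  qed simp
qed

lemma cj_Imat2: "cj (Emat 2) (Imat 2) = psi 2"
proof -
  have "Imat 2 \<in> carrier_mat 2 2" using Imat_carrier[of 2] by simp
  hence "cj (Emat 2) (Imat 2) = Imat 2" by (simp add: cj_def numeral_2_eq_2)
  also have "Imat 2 = psi 2"
    by (rule eq_matI, auto simp: numeral_2_eq_2 psi_idx pp_def sg_def less_Suc_eq)
  finally show ?thesis .
qed

lemma Emat_cj_even: assumes "n \<ge> 2" "even n"
  shows "cj (Emat n) (Imat n) = (if n mod 4 = 0 then sigma (2^(n-1)) else psi (2^(n-1)))"
proof (cases "n = 2")
  case True thus ?thesis using cj_Imat2 by simp
next
  case False
  then obtain m where n: "n = Suc (Suc (Suc m))" using assms by (metis le_SucE le_add_diff_inverse2 add_2_eq_Suc' nat_le_iff_add numeral_2_eq_2 Suc_leI le_neq_implies_less)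
  show ?thesis using Emat_even[OF n assms(2)] .
qed

lemma dim_Emat[simp]: "dim_row (Emat n) = 2^(n-1)" "dim_col (Emat n) = 2^(n-1)"
  using Emat_carrier[of n] by auto

lemma Emat_odd: assumes n: "n = Suc (Suc (Suc m))" and od: "odd n"
  shows "cj (Emat n) (Imat n) = (if n mod 4 = 1 then sigma (2^(n-1)) else psi (2^(n-1)))"
proof -
  define h where "h = (2::nat)^Suc m"
  define J where "J = Imat (Suc (Suc m))"
  define F where "F = Emat (Suc (Suc m))"
  have hev: "even h" unfolding h_def by simp
  have hn: "2^(n-1) = h + h" unfolding h_def n by simp
  have J: "J \<in> carrier_mat h h" unfolding J_def h_def using Imat_carrier[of "Suc (Suc m)"] by simp
  have F: "F \<in> carrier_mat h h" unfolding F_def h_def using Emat_carrier[of "Suc (Suc m)"] by simp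
  have I: "Imat n = four_block_mat J (0\<^sub>m h h) (0\<^sub>m h h) (- J)"
    unfolding n J_def h_def using od n by simp
  have S': "cj F J = (if Suc (Suc m) mod 4 = 0 then sigma h else psi h)"
    unfolding F_def J_def h_def using Emat_cj_even[of "Suc (Suc m)"] od n by simp
  let ?z = "0\<^sub>m h h :: int mat" and ?o = "1\<^sub>m h :: int mat"
  define X where "X = (if n mod 4 = 1 then psi h else sigma h)"
  have X: "X \<in> carrier_mat h h" unfolding X_def by auto
  have E: "Emat n = four_block_mat F ?z ?z F * four_block_mat ?o ?z ?z X"
  proof -
    have "n mod 4 = 1 \<or> n mod 4 = 3" using od by presburger
    thus ?thesis unfolding n h_def F_def X_def by (auto simp: Let_def blk_diag_def simp del: Imat.simps)
  qed
  have cD1: "four_block_mat F ?z ?z F \<in> carrier_mat (h+h) (h+h)" using F by auto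
  have cD2: "four_block_mat ?o ?z ?z X \<in> carrier_mat (h+h) (h+h)" using X by auto
  have cI: "Imat n \<in> carrier_mat (h+h) (h+h)" unfolding I using J by auto
  have s1: "cj (four_block_mat F ?z ?z F) (Imat n) = four_block_mat (cj F J) ?z ?z (- cj F J)"
    unfolding I cj_diag[OF F F J uminus_carrier_mat[OF J]] using F J by (simp add: cj_def)
  have "cj (Emat n) (Imat n) = cj (four_block_mat ?o ?z ?z X) (cj (four_block_mat F ?z ?z F) (Imat n))"
    unfolding E by (rule cj_mult[OF cD1 cD2 cI])
  also have "\<dots> = four_block_mat (cj F J) ?z ?z (X\<^sup>T * (- cj F J * X))"
    unfolding s1 by (subst cj_diag, insert F J X, auto simp: cj_def)
  finally have e: "cj (Emat n) (Imat n) = four_block_mat (cj F J) ?z ?z (X\<^sup>T * (- cj F J * X))" .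
  show ?thesis
  proof (cases "n mod 4 = 1")
    case True
    hence "Suc (Suc m) mod 4 = 0" using n by presburger
    thus ?thesis unfolding e S' hn X_def using True psi_sigma_psi[OF hev] sigma_block[OF hev]
      by (simp add: psi_T)
  next
    case False
    hence "Suc (Suc m) mod 4 \<noteq> 0" using n od by presburger
    thus ?thesis unfolding e S' hn X_def using False sigma_psi_sigma[OF hev] psi_block[OF hev]
      by (simp add: sigma_T)
  qed
qed

definition inv_ex :: "nat \<Rightarrow> 'a::comm_ring_1 mat \<Rightarrow> bool" where
  "inv_ex N A \<longleftrightarrow> (\<exists>B. B \<in> carrier_mat N N \<and> A * B = 1\<^sub>m N \<and> B * A = 1\<^sub>m N)"

lemma inv_ex_one: "inv_ex N (1\<^sub>m N)" unfolding inv_ex_def by (intro exI[of _ "1\<^sub>m N"], auto)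

lemma inv_ex_mult: assumes A: "A \<in> carrier_mat N N" and B: "B \<in> carrier_mat N N"
  and iA: "inv_ex N A" and iB: "inv_ex N B" shows "inv_ex N (A * B)"
proof -
  obtain A' where A': "A' \<in> carrier_mat N N" "A * A' = 1\<^sub>m N" "A' * A = 1\<^sub>m N" using iA unfolding inv_ex_def by auto
  obtain B' where B': "B' \<in> carrier_mat N N" "B * B' = 1\<^sub>m N" "B' * B = 1\<^sub>m N" using iB unfolding inv_ex_def by auto
  have "A * B * (B' * A') = A * (B * (B' * A'))" using A B A' B' by (intro assoc_mult_mat, auto)
  also have "B * (B' * A') = B * B' * A'" using A B A' B' by (intro assoc_mult_mat[symmetric], auto)
  also have "A * (B * B' * A') = 1\<^sub>m N" using A A' B' by simp
  finally have 1: "A * B * (B' * A') = 1\<^sub>m N" .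
  have "B' * A' * (A * B) = B' * (A' * (A * B))" using A B A' B' by (intro assoc_mult_mat, auto)
  also have "A' * (A * B) = A' * A * B" using A B A' B' by (intro assoc_mult_mat[symmetric], auto)
  also have "B' * (A' * A * B) = 1\<^sub>m N" using B A' B' by simp
  finally have 2: "B' * A' * (A * B) = 1\<^sub>m N" .
  show ?thesis unfolding inv_ex_def using 1 2 A' B' by (intro exI[of _ "B' * A'"], auto)
qed

lemma inv_ex_diag: fixes A D :: "'a::comm_ring_1 mat"
  assumes A: "A \<in> carrier_mat h h" and D: "D \<in> carrier_mat h h"
  and iA: "inv_ex h A" and iD: "inv_ex h D" shows "inv_ex (h + h) (four_block_mat A (0\<^sub>m h h) (0\<^sub>m h h) D)"
proof -
  obtain A' where A': "A' \<in> carrier_mat h h" "A * A' = 1\<^sub>m h" "A' * A = 1\<^sub>m h" using iA unfolding inv_ex_def by auto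
  obtain D' where D': "D' \<in> carrier_mat h h" "D * D' = 1\<^sub>m h" "D' * D = 1\<^sub>m h" using iD unfolding inv_ex_def by auto
  let ?z = "0\<^sub>m h h :: 'a mat"
  have 1: "four_block_mat A ?z ?z D * four_block_mat A' ?z ?z D' = four_block_mat (A * A' + ?z * ?z) (A * ?z + ?z * D') (?z * A' + D * ?z) (?z * ?z + D * D')"
    by (rule mult_fb, insert A D A' D', auto)
  have 2: "four_block_mat A' ?z ?z D' * four_block_mat A ?z ?z D = four_block_mat (A' * A + ?z * ?z) (A' * ?z + ?z * D) (?z * A + D' * ?z) (?z * ?z + D' * D)"
    by (rule mult_fb, insert A D A' D', auto)
  show ?thesis unfolding inv_ex_def
    by (intro exI[of _ "four_block_mat A' ?z ?z D'"], unfold 1 2, insert A D A' D', auto)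
qed

lemma inv_ex_lower: fixes T :: "'a::comm_ring_1 mat"
  assumes T: "T \<in> carrier_mat h h" shows "inv_ex (h + h) (four_block_mat (1\<^sub>m h) (0\<^sub>m h h) T (1\<^sub>m h))"
proof -
  let ?z = "0\<^sub>m h h :: 'a mat" and ?o = "1\<^sub>m h :: 'a mat"
  have 1: "four_block_mat ?o ?z T ?o * four_block_mat ?o ?z (- T) ?o = four_block_mat (?o * ?o + ?z * - T) (?o * ?z + ?z * ?o) (T * ?o + ?o * - T) (T * ?z + ?o * ?o)"
    by (rule mult_fb, insert T, auto)
  have 2: "four_block_mat ?o ?z (- T) ?o * four_block_mat ?o ?z T ?o = four_block_mat (?o * ?o + ?z * T) (?o * ?z + ?z * ?o) (- T * ?o + ?o * T) (- T * ?z + ?o * ?o)"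
    by (rule mult_fb, insert T, auto)
  have a: "T + - T = ?z" "- T + T = ?z" using T by auto
  show ?thesis unfolding inv_ex_def
    by (intro exI[of _ "four_block_mat ?o ?z (- T) ?o"], unfold 1 2, insert T a, auto)
qed

lemma inv_ex_upper: fixes T :: "'a::comm_ring_1 mat"
  assumes T: "T \<in> carrier_mat h h" shows "inv_ex (h + h) (four_block_mat (1\<^sub>m h) T (0\<^sub>m h h) (1\<^sub>m h))"
proof -
  let ?z = "0\<^sub>m h h :: 'a mat" and ?o = "1\<^sub>m h :: 'a mat"
  have 1: "four_block_mat ?o T ?z ?o * four_block_mat ?o (- T) ?z ?o = four_block_mat (?o * ?o + T * ?z) (?o * - T + T * ?o) (?z * ?o + ?o * ?z) (?z * - T + ?o * ?o)"
    by (rule mult_fb, insert T, auto)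
  have 2: "four_block_mat ?o (- T) ?z ?o * four_block_mat ?o T ?z ?o = four_block_mat (?o * ?o + - T * ?z) (?o * T + - T * ?o) (?z * ?o + ?o * ?z) (?z * T + ?o * ?o)"
    by (rule mult_fb, insert T, auto)
  have a: "T + - T = ?z" "- T + T = ?z" using T by auto
  show ?thesis unfolding inv_ex_def
    by (intro exI[of _ "four_block_mat ?o (- T) ?z ?o"], unfold 1 2, insert T a, auto)
qed

lemma inv_ex_sigma: "even h \<Longrightarrow> inv_ex h (sigma h)"
  unfolding inv_ex_def using sigma_sq by (intro exI[of _ "sigma h"], auto)
lemma inv_ex_psi: "even h \<Longrightarrow> inv_ex h (psi h)"
  unfolding inv_ex_def using psi_sq by (intro exI[of _ "- psi h"], auto)
lemma inv_ex_ImatT: "inv_ex (2^m) ((Imat (Suc m))\<^sup>T)"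
  unfolding inv_ex_def using Imat_props[of m] Imat_TI[of m] Imat_carrier[of "Suc m"]
  by (intro exI[of _ "Imat (Suc m)"], auto)

lemma Emat_inv_SSS: assumes E': "inv_ex (2^Suc m) (Emat (Suc (Suc m))) \<or> even (Suc (Suc (Suc m)))"
  shows "inv_ex (2^Suc (Suc m)) (Emat (Suc (Suc (Suc m))))"
proof -
  define h where "h = (2::nat)^Suc m"
  have hev: "even h" unfolding h_def by simp
  have hn: "2^(Suc (Suc m)) = h + h" unfolding h_def by simp
  define J where "J = Imat (Suc (Suc m))"
  have J: "J \<in> carrier_mat h h" using Imat_carrier[of "Suc (Suc m)"] unfolding h_def J_def by simp
  have iJ: "inv_ex h J\<^sup>T" using inv_ex_ImatT[of "Suc m"] unfolding h_def J_def .
  let ?z = "0\<^sub>m h h :: int mat" and ?o = "1\<^sub>m h :: int mat"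
  have io: "inv_ex h ?o" by (rule inv_ex_one)
  show ?thesis
  proof (cases "even (Suc (Suc (Suc m)))")
    case True
    define Y where "Y = (if Suc (Suc (Suc m)) mod 4 = 0 then - sigma h else psi h)"
    define Z where "Z = (if Suc (Suc (Suc m)) mod 4 = 0 then psi h else sigma h)"
    have Y: "Y \<in> carrier_mat h h" and Z: "Z \<in> carrier_mat h h" unfolding Y_def Z_def by auto
    have iZ: "inv_ex h Z" unfolding Z_def using inv_ex_sigma[OF hev] inv_ex_psi[OF hev] by auto
    have E: "Emat (Suc (Suc (Suc m))) = four_block_mat ?o ?z ?z J\<^sup>T * four_block_mat ?o ?z (tau h) ?o
          * four_block_mat ?o Y ?z ?o * four_block_mat ?o ?z ?z Z"
    proof -
      have "Suc (Suc (Suc m)) mod 4 = 0 \<or> Suc (Suc (Suc m)) mod 4 = 2" using True by presburger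
      thus ?thesis unfolding h_def J_def Y_def Z_def
        by (auto simp: Let_def blk_diag_def blk_lower_def blk_upper_def simp del: Imat.simps)
    qed
    have c1: "four_block_mat ?o ?z ?z J\<^sup>T \<in> carrier_mat (h+h) (h+h)" using J by auto
    have c2: "four_block_mat ?o ?z (tau h) ?o \<in> carrier_mat (h+h) (h+h)" by auto
    have c3: "four_block_mat ?o Y ?z ?o \<in> carrier_mat (h+h) (h+h)" using Y by auto
    have c4: "four_block_mat ?o ?z ?z Z \<in> carrier_mat (h+h) (h+h)" using Z by auto
    have i1: "inv_ex (h+h) (four_block_mat ?o ?z ?z J\<^sup>T)" by (rule inv_ex_diag[OF _ _ io iJ], insert J, auto)
    have i2: "inv_ex (h+h) (four_block_mat ?o ?z (tau h) ?o)" by (rule inv_ex_lower, auto)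
    have i3: "inv_ex (h+h) (four_block_mat ?o Y ?z ?o)" by (rule inv_ex_upper[OF Y])
    have i4: "inv_ex (h+h) (four_block_mat ?o ?z ?z Z)" by (rule inv_ex_diag[OF _ Z io iZ], auto)
    show ?thesis unfolding hn E
      by (rule inv_ex_mult[OF mult_carrier_mat[OF mult_carrier_mat[OF c1 c2] c3] c4
          inv_ex_mult[OF mult_carrier_mat[OF c1 c2] c3 inv_ex_mult[OF c1 c2 i1 i2] i3] i4])
  next
    case False
    define X where "X = (if Suc (Suc (Suc m)) mod 4 = 1 then psi h else sigma h)"
    define F where "F = Emat (Suc (Suc m))"
    have F: "F \<in> carrier_mat h h" unfolding F_def h_def using Emat_carrier[of "Suc (Suc m)"] by simp
    have iF: "inv_ex h F" using E' False unfolding F_def h_def by simp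
    have X: "X \<in> carrier_mat h h" unfolding X_def by auto
    have iX: "inv_ex h X" unfolding X_def using inv_ex_sigma[OF hev] inv_ex_psi[OF hev] by auto
    have E: "Emat (Suc (Suc (Suc m))) = four_block_mat F ?z ?z F * four_block_mat ?o ?z ?z X"
    proof -
      have "Suc (Suc (Suc m)) mod 4 = 1 \<or> Suc (Suc (Suc m)) mod 4 = 3" using False by presburger
      thus ?thesis unfolding h_def F_def X_def by (auto simp: Let_def blk_diag_def simp del: Imat.simps)
    qed
    have c1: "four_block_mat F ?z ?z F \<in> carrier_mat (h+h) (h+h)" using F by auto
    have c2: "four_block_mat ?o ?z ?z X \<in> carrier_mat (h+h) (h+h)" using X by auto
    show ?thesis unfolding hn E
      by (rule inv_ex_mult[OF c1 c2 inv_ex_diag[OF F F iF iF] inv_ex_diag[OF _ X io iX]], auto)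
  qed
qed

lemma Emat_inv: "inv_ex (2^(n-1)) (Emat n)"
proof (induction n rule: less_induct)
  case (less n)
  show ?case
  proof (cases n)
    case (Suc k)
    show ?thesis
    proof (cases k)
      case (Suc k2)
      show ?thesis
      proof (cases k2)
        case (Suc m)
        have "inv_ex (2^Suc m) (Emat (Suc (Suc m)))"
          using less[of "Suc (Suc m)"] \<open>n = Suc k\<close> \<open>k = Suc k2\<close> Suc by simp
        thus ?thesis using Emat_inv_SSS[of m] \<open>n = Suc k\<close> \<open>k = Suc k2\<close> Suc by simp
      qed (insert \<open>n = Suc k\<close> \<open>k = Suc k2\<close>, simp add: inv_ex_one numeral_2_eq_2)
    qed (insert \<open>n = Suc k\<close>, simp add: inv_ex_one)
  qed (simp add: inv_ex_one)
qed

lemma int_mat_inv_props: assumes A: "A \<in> carrier_mat N N" and i: "inv_ex N A"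
  shows "int_mat_inv N A \<in> carrier_mat N N \<and> A * int_mat_inv N A = 1\<^sub>m N \<and> int_mat_inv N A * A = 1\<^sub>m N"
proof -
  obtain B where B: "B \<in> carrier_mat N N" "A * B = 1\<^sub>m N" "B * A = 1\<^sub>m N" using i unfolding inv_ex_def by auto
  have "int_mat_inv N A = B" unfolding int_mat_inv_def
  proof (rule the_equality)
    fix C assume C: "C \<in> carrier_mat N N \<and> A * C = 1\<^sub>m N \<and> C * A = 1\<^sub>m N"
    have "C = C * (A * B)" using C B by auto
    also have "\<dots> = C * A * B" using C B A by (intro assoc_mult_mat[symmetric], auto)
    also have "\<dots> = B" using C B by simp
    finally show "C = B" .
  qed (use B in auto)
  thus ?thesis using B by simp
qed

lemma alpha_zero: "alpha (Suc m) (\<lambda>_. 0) (\<lambda>_. 0) = (0\<^sub>m (2^m) (2^m) :: 'a::comm_ring_1 mat)"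
proof (induction m)
  case 0 show ?case by (rule eq_matI, auto)
next
  case (Suc m)
  have e: "(\<lambda>_. 0 :: 'a) \<circ> Suc = (\<lambda>_. 0)" by auto
  show ?case unfolding alpha_SS e Suc by (rule eq_matI, auto)
qed

lemma alpha_e1: "alpha (Suc m) e1 e1 = (1\<^sub>m (2^m) :: 'a::comm_ring_1 mat)"
proof (cases m)
  case 0 show ?thesis unfolding 0 by (rule eq_matI, auto simp: e1_def)
next
  case (Suc k)
  have e: "(e1 :: nat \<Rightarrow> 'a) \<circ> Suc = (\<lambda>_. 0)" by (auto simp: e1_def)
  show ?thesis unfolding Suc alpha_SS e alpha_zero by (rule eq_matI, auto simp: e1_def)
qed

lemma Psi1_ok: "t dvd 1 \<Longrightarrow> in_S 2 (Psi1 (t::'a::comm_ring_1))"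
proof -
  assume t: "t dvd 1"
  have c: "Psi1 t \<in> carrier_mat 2 2" unfolding Psi1_def by auto
  have ut: "upper_triangular (Psi1 t)" unfolding Psi1_def by (auto intro!: upper_triangularI)
  have "det (Psi1 t) = prod_list (diag_mat (Psi1 t))" by (rule det_upper_triangular[OF ut c])
  also have "\<dots> = - t" unfolding Psi1_def by (simp add: diag_mat_def numeral_2_eq_2)
  finally have "det (Psi1 t) dvd 1" using t by simp
  moreover have "(Psi1 t)\<^sup>T = Psi1 t" unfolding Psi1_def by (rule eq_matI, auto)
  ultimately show ?thesis unfolding in_S_def in_GL_def using c by simp
qed

lemma ofm_cj: "A \<in> carrier_mat N N \<Longrightarrow> X \<in> carrier_mat N N \<Longrightarrow> ofm (cj A X) = cj (ofm A) (ofm X)"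
proof -
  assume A: "A \<in> carrier_mat N N" and X: "X \<in> carrier_mat N N"
  have "ofm (A\<^sup>T * (X * A)) = ofm (A\<^sup>T) * ofm (X * A)" using A X by (intro ofm_mult[of _ N N], auto)
  also have "ofm (X * A) = ofm X * ofm A" using A X by (intro ofm_mult[of _ N N], auto)
  finally show ?thesis unfolding cj_def ofm_T .
qed

lemma smult_one_one[simp]: "(1::'a::comm_ring_1) \<cdot>\<^sub>m 1\<^sub>m n = 1\<^sub>m n"
  by (rule eq_matI, auto)

lemma cancel_left: fixes P Q X :: "'a::comm_ring_1 mat"
  assumes "P \<in> carrier_mat N N" "Q \<in> carrier_mat N N" "P * Q = 1\<^sub>m N" "X \<in> carrier_mat N k"
  shows "P * (Q * X) = X"
proof -
  have "P * (Q * X) = P * Q * X" using assms by (intro assoc_mult_mat[symmetric], auto)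
  thus ?thesis using assms by simp
qed

lemma main_even:
  fixes x y :: "nat \<Rightarrow> 'a::comm_ring_1"
  assumes n2: "n \<ge> 2" and ev: "even n" and s: "(\<Sum>i<n. x i * y i) = 1"
  shows "Psi n x y \<in> carrier_mat (2^(n-1)) (2^(n-1)) \<and> det (Psi n x y) dvd 1 \<and>
    (Psi n x y)\<^sup>T * ofm (if n mod 4 = 0 then sigma (2^(n-1)) else psi (2^(n-1))) * Psi n x y
     = ofm (if n mod 4 = 0 then sigma (2^(n-1)) else psi (2^(n-1)))"
proof -
  obtain m where n: "n = Suc m" using n2 by (cases n, auto)
  define N where "N = (2::nat)^(n-1)"
  have Nm: "N = 2^m" unfolding N_def n by simp
  define E where "E = (ofm (Emat n) :: 'a mat)"
  define Ei where "Ei = (ofm (int_mat_inv N (Emat n)) :: 'a mat)"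
  define Ii where "Ii = (ofm (Imat n) :: 'a mat)"
  define A where "A = alpha n x y"
  define B where "B = alpha n y x"
  define S where "S = (ofm (if n mod 4 = 0 then sigma (2^(n-1)) else psi (2^(n-1))) :: 'a mat)"
  have cEint: "Emat n \<in> carrier_mat N N" unfolding N_def by (rule Emat_carrier)
  note iprops = int_mat_inv_props[OF cEint Emat_inv[of n, folded N_def]]
  have E: "E \<in> carrier_mat N N" unfolding E_def using cEint by simp
  have Ei: "Ei \<in> carrier_mat N N" unfolding Ei_def using iprops by simp
  have Ii: "Ii \<in> carrier_mat N N" unfolding Ii_def N_def using Imat_carrier[of n] by simp
  have A: "A \<in> carrier_mat N N" unfolding A_def N_def by (rule alpha_carrier)
  have B: "B \<in> carrier_mat N N" unfolding B_def N_def by (rule alpha_carrier)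
  have EEi: "E * Ei = 1\<^sub>m N" unfolding E_def Ei_def using iprops cEint
    by (metis ofm_mult ofm_one)
  have EiE: "Ei * E = 1\<^sub>m N" unfolding E_def Ei_def using iprops cEint
    by (metis ofm_mult ofm_one)
  have EiTET: "Ei\<^sup>T * E\<^sup>T = 1\<^sub>m N" using EEi E Ei by (metis transpose_mult transpose_one)
  have cjS: "E\<^sup>T * (Ii * E) = S"
  proof -
    have h2: "ofm (cj (Emat n) (Imat n)) = (cj E Ii :: 'a mat)"
      unfolding E_def Ii_def by (rule ofm_cj[of _ N], rule cEint, insert Imat_carrier[of n], simp add: N_def)
    have h1: "ofm (cj (Emat n) (Imat n)) = S" unfolding S_def Emat_cj_even[OF n2 ev] ..
    show ?thesis using h1 h2 unfolding cj_def by simp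
  qed
  have IiIiT: "Ii * Ii\<^sup>T = 1\<^sub>m N"
  proof -
    have "Imat n * (Imat n)\<^sup>T = 1\<^sub>m N" unfolding n Nm using Imat_props[of m] by blast
    hence "ofm (Imat n * (Imat n)\<^sup>T) = (1\<^sub>m N :: 'a mat)" by simp
    thus ?thesis unfolding Ii_def using Imat_carrier[of n]
      by (subst (asm) ofm_mult[of _ N N], auto simp: N_def ofm_T)
  qed
  have AI: "Ii\<^sup>T * (A * Ii) = B" unfolding Ii_def A_def B_def n using alpha_I[of m x y] ev n by simp
  have BAT: "B * A\<^sup>T = 1\<^sub>m N"
  proof -
    have "(\<Sum>i<n. y i * x i) = 1" using s by (simp add: mult.commute)
    thus ?thesis unfolding A_def B_def n Nm using suslin[of m y x] by simp
  qed
  have AIi: "A * Ii = Ii * B"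
  proof -
    have "Ii * (Ii\<^sup>T * (A * Ii)) = A * Ii" by (rule cancel_left[OF Ii _ IiIiT], insert A Ii, auto)
    thus ?thesis unfolding AI by simp
  qed
  have key: "\<And>(X::'a mat) k. X \<in> carrier_mat N k \<Longrightarrow> A * (Ii * (A\<^sup>T * X)) = Ii * X"
  proof -
    fix X :: "'a mat" and k assume X: "X \<in> carrier_mat N k"
    have "A * (Ii * (A\<^sup>T * X)) = (A * Ii) * (A\<^sup>T * X)" using A Ii X by (intro assoc_mult_mat[symmetric], auto)
    also have "\<dots> = Ii * B * (A\<^sup>T * X)" unfolding AIi ..
    also have "\<dots> = Ii * (B * (A\<^sup>T * X))" using B Ii A X by (intro assoc_mult_mat, auto)
    also have "B * (A\<^sup>T * X) = X" using cancel_left[OF B _ BAT X] A by simp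
    finally show "A * (Ii * (A\<^sup>T * X)) = Ii * X" .
  qed
  have P: "Psi n x y = Ei * A\<^sup>T * E" unfolding Psi_def E_def Ei_def A_def N_def using ev by simp
  have cP: "Psi n x y \<in> carrier_mat N N" unfolding P using Ei A E by auto
  have dP: "det (Psi n x y) dvd 1"
  proof -
    have "det (Psi n x y) = det Ei * det A\<^sup>T * det E" unfolding P using Ei A E
      by (simp add: det_mult[of _ N])
    moreover have "det Ei * det E = 1" using det_mult[OF Ei E] EiE by simp
    moreover have "det B * det A\<^sup>T = 1" using det_mult[of B N "A\<^sup>T"] BAT A B by simp
    ultimately show ?thesis by (metis dvd_triv_left dvd_triv_right is_unit_mult_iff mult.commute)
  qed
  have "(Psi n x y)\<^sup>T * S * Psi n x y = S"
    unfolding P cjS[symmetric] using E Ei A Ii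
    by (simp add: assoc_mult_mat[of _ N N _ N _ N] transpose_mult[of _ N N _ N] mult_carrier_mat[of _ N N _ N]
         cancel_left[OF E Ei EEi, where k=N] cancel_left[OF _ _ EiTET, where k=N] key[where k=N])
  thus ?thesis using cP dP unfolding N_def S_def by simp
qed

lemma main_odd:
  fixes x y :: "nat \<Rightarrow> 'a::comm_ring_1"
  assumes n2: "n \<ge> 2" and od: "odd n" and s: "(\<Sum>i<n. x i * y i) = 1"
  shows "Psi n x y \<in> carrier_mat (2^(n-1)) (2^(n-1)) \<and> det (Psi n x y) dvd 1 \<and>
    (Psi n x y)\<^sup>T = (if n mod 4 = 1 then Psi n x y else - Psi n x y)"
proof -
  obtain m where n: "n = Suc m" using n2 by (cases n, auto)
  define N where "N = (2::nat)^(n-1)"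
  have Nm: "N = 2^m" unfolding N_def n by simp
  define E where "E = (ofm (Emat n) :: 'a mat)"
  define Ii where "Ii = (ofm (Imat n) :: 'a mat)"
  define A where "A = alpha n x y"
  define B where "B = alpha n y x"
  have cEint: "Emat n \<in> carrier_mat N N" unfolding N_def by (rule Emat_carrier)
  note iprops = int_mat_inv_props[OF cEint Emat_inv[of n, folded N_def]]
  define Ei where "Ei = (ofm (int_mat_inv N (Emat n)) :: 'a mat)"
  have E: "E \<in> carrier_mat N N" unfolding E_def using cEint by simp
  have Ei: "Ei \<in> carrier_mat N N" unfolding Ei_def using iprops by simp
  have Ii: "Ii \<in> carrier_mat N N" unfolding Ii_def N_def using Imat_carrier[of n] by simp
  have A: "A \<in> carrier_mat N N" unfolding A_def N_def by (rule alpha_carrier)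
  have B: "B \<in> carrier_mat N N" unfolding B_def N_def by (rule alpha_carrier)
  have EEi: "E * Ei = 1\<^sub>m N" unfolding E_def Ei_def using iprops cEint
    by (metis ofm_mult ofm_one)
  have IiIiT: "Ii * Ii\<^sup>T = 1\<^sub>m N"
  proof -
    have "Imat n * (Imat n)\<^sup>T = 1\<^sub>m N" unfolding n Nm using Imat_props[of m] by blast
    hence "ofm (Imat n * (Imat n)\<^sup>T) = (1\<^sub>m N :: 'a mat)" by simp
    thus ?thesis unfolding Ii_def using Imat_carrier[of n]
      by (subst (asm) ofm_mult[of _ N N], auto simp: N_def ofm_T)
  qed
  have IiTIi: "Ii\<^sup>T * Ii = 1\<^sub>m N"
  proof -
    have "(Imat n)\<^sup>T * Imat n = 1\<^sub>m N" unfolding n Nm using Imat_TI[of m] by blast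
    hence "ofm ((Imat n)\<^sup>T * Imat n) = (1\<^sub>m N :: 'a mat)" by simp
    thus ?thesis unfolding Ii_def using Imat_carrier[of n]
      by (subst (asm) ofm_mult[of _ N N], auto simp: N_def ofm_T)
  qed
  have IiT: "Ii\<^sup>T = (if n mod 4 = 1 then Ii else - Ii)"
  proof -
    have "(Imat n)\<^sup>T = (if n mod 4 = 1 then Imat n else - Imat n)"
      using Imat_props[of m, THEN conjunct2] od unfolding n by presburger
    hence "ofm ((Imat n)\<^sup>T) = (ofm (if n mod 4 = 1 then Imat n else - Imat n) :: 'a mat)" by simp
    thus ?thesis unfolding Ii_def ofm_T by (cases "n mod 4 = 1", auto)
  qed
  have AI: "Ii\<^sup>T * (A * Ii) = A\<^sup>T" unfolding Ii_def A_def n using alpha_I[of m x y] od n by simp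
  have BAT: "B * A\<^sup>T = 1\<^sub>m N"
  proof -
    have "(\<Sum>i<n. y i * x i) = 1" using s by (simp add: mult.commute)
    thus ?thesis unfolding A_def B_def n Nm using suslin[of m y x] by simp
  qed
  define C where "C = A * Ii"
  have Cc: "C \<in> carrier_mat N N" unfolding C_def using A Ii by auto
  have CT: "C\<^sup>T = (if n mod 4 = 1 then C else - C)"
  proof -
    have "C\<^sup>T = Ii\<^sup>T * A\<^sup>T" unfolding C_def using A Ii by (simp add: transpose_mult[of _ N N _ N])
    also have "\<dots> = Ii\<^sup>T * (Ii\<^sup>T * C)" unfolding C_def AI ..
    finally have e: "C\<^sup>T = Ii\<^sup>T * (Ii\<^sup>T * C)" .
    show ?thesis
    proof (cases "n mod 4 = 1")
      case True
      hence "Ii\<^sup>T * (Ii\<^sup>T * C) = Ii\<^sup>T * (Ii * C)" using IiT by simp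
      also have "\<dots> = C" by (rule cancel_left[OF _ Ii IiTIi Cc], insert Ii, simp)
      finally show ?thesis using e True by simp
    next
      case False
      hence "Ii\<^sup>T * (Ii\<^sup>T * C) = - (Ii\<^sup>T * (Ii * C))" using IiT Ii Cc by simp
      also have "Ii\<^sup>T * (Ii * C) = C" by (rule cancel_left[OF _ Ii IiTIi Cc], insert Ii, simp)
      finally show ?thesis using e False by simp
    qed
  qed
  have P0: "Psi n x y = E\<^sup>T * A * Ii * E" unfolding Psi_def E_def Ii_def A_def using od by simp
  have P: "Psi n x y = E\<^sup>T * (C * E)" unfolding P0 C_def using A Ii E
    by (simp add: assoc_mult_mat[of _ N N _ N _ N] mult_carrier_mat[of _ N N _ N])
  have cP: "Psi n x y \<in> carrier_mat N N" unfolding P using Cc E by auto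
  have PT: "(Psi n x y)\<^sup>T = E\<^sup>T * (C\<^sup>T * E)" unfolding P using Cc E
    by (simp add: assoc_mult_mat[of _ N N _ N _ N] transpose_mult[of _ N N _ N] mult_carrier_mat[of _ N N _ N])
  have dP: "det (Psi n x y) dvd 1"
  proof -
    have "det (Psi n x y) = det E\<^sup>T * (det A * det Ii * det E)" unfolding P C_def using E A Ii
      by (simp add: det_mult[of _ N])
    moreover have "det E * det Ei = 1" using det_mult[OF E Ei] EEi by simp
    moreover have "det B * det A\<^sup>T = 1" using det_mult[of B N "A\<^sup>T"] BAT A B by simp
    moreover have "det Ii * det Ii\<^sup>T = 1" using det_mult[of Ii N "Ii\<^sup>T"] IiIiT Ii by simp
    moreover have "det E\<^sup>T = det E" "det A\<^sup>T = det A" "det Ii\<^sup>T = det Ii"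
      using E A Ii by (auto simp: det_transpose)
    ultimately show ?thesis by (metis dvd_triv_left dvd_triv_right is_unit_mult_iff mult.commute)
  qed
  have "(Psi n x y)\<^sup>T = (if n mod 4 = 1 then Psi n x y else - Psi n x y)"
  proof (cases "n mod 4 = 1")
    case True thus ?thesis unfolding PT unfolding CT P by simp
  next
    case False thus ?thesis unfolding PT unfolding CT P using Cc E by simp
  qed
  thus ?thesis using cP dP unfolding N_def by simp
qed

lemma base_even: assumes n2: "n \<ge> 2" and ev: "even n"
  shows "Psi n (e1::nat \<Rightarrow> 'a::comm_ring_1) e1 = 1\<^sub>m (2^(n-1))"
proof -
  obtain m where n: "n = Suc m" using n2 by (cases n, auto)
  define N where "N = (2::nat)^(n-1)"
  have cEint: "Emat n \<in> carrier_mat N N" unfolding N_def by (rule Emat_carrier)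
  note iprops = int_mat_inv_props[OF cEint Emat_inv[of n, folded N_def]]
  have "Psi n (e1::nat \<Rightarrow> 'a) e1 = ofm (int_mat_inv N (Emat n)) * ofm (Emat n)"
  proof -
    have ci: "int_mat_inv N (Emat n) \<in> carrier_mat N N" using iprops by blast
    have "ofm (int_mat_inv N (Emat n)) * 1\<^sub>m N = (ofm (int_mat_inv N (Emat n)) :: 'a mat)"
      by (rule right_mult_one_mat, insert ci, simp)
    thus ?thesis unfolding Psi_def using ev unfolding n N_def by (simp add: alpha_e1)
  qed
  also have "\<dots> = ofm (int_mat_inv N (Emat n) * Emat n)" using iprops cEint by (intro ofm_mult[symmetric], auto)
  also have "\<dots> = 1\<^sub>m N" using iprops by simp
  finally show ?thesis unfolding N_def .
qed

lemma base_odd: assumes n2: "n \<ge> 2" and od: "odd n"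
  shows "Psi n (e1::nat \<Rightarrow> 'a::comm_ring_1) e1 = ofm (if n mod 4 = 1 then sigma (2^(n-1)) else psi (2^(n-1)))"
proof -
  have "n \<noteq> 2" using od by auto
  hence "n \<ge> 3" using n2 by simp
  hence n: "n = Suc (Suc (Suc (n - 3)))" by simp
  define m where "m = n - 3"
  note n = n[folded m_def]
  define N where "N = (2::nat)^(n-1)"
  have cEint: "Emat n \<in> carrier_mat N N" unfolding N_def by (rule Emat_carrier)
  have cI: "Imat n \<in> carrier_mat N N" unfolding N_def by (rule Imat_carrier)
  have "Psi n (e1::nat \<Rightarrow> 'a) e1 = (ofm (Emat n))\<^sup>T * (ofm (Imat n) * ofm (Emat n))"
    unfolding Psi_def using od cEint cI unfolding n N_def
    by (simp add: alpha_e1 assoc_mult_mat[of _ "2^Suc (Suc m)" "2^Suc (Suc m)" _ "2^Suc (Suc m)" _ "2^Suc (Suc m)"])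
  also have "\<dots> = ofm (cj (Emat n) (Imat n))" unfolding cj_def[symmetric] by (rule ofm_cj[OF cEint cI, symmetric])
  also have "\<dots> = ofm (if n mod 4 = 1 then sigma (2^(n-1)) else psi (2^(n-1)))"
    unfolding Emat_odd[OF n od] ..
  finally show ?thesis .
qed

theorem proposition3p6:
  fixes \<phi> :: "'k::field \<Rightarrow> 'r::comm_ring_1"
  assumes char_not_2: "(2::'k) \<noteq> 0"
    and alg_one: "\<phi> 1 = 1"
    and alg_add: "\<And>a b. \<phi> (a + b) = \<phi> a + \<phi> b"
    and alg_mult: "\<And>a b. \<phi> (a * b) = \<phi> a * \<phi> b"
  shows "(\<forall>t::'r. t dvd 1 \<longrightarrow> in_S 2 (Psi1 t))
    \<and> (\<forall>n::nat. n \<ge> 2 \<longrightarrow>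
        (n mod 4 = 0 \<longrightarrow>
           (\<forall>x y::nat \<Rightarrow> 'r. (\<Sum>i<n. x i * y i) = 1 \<longrightarrow> in_O (2^(n-1)) (Psi n x y))
           \<and> Psi n (e1::nat \<Rightarrow> 'r) e1 = 1\<^sub>m (2^(n-1)))
      \<and> (n mod 4 = 1 \<longrightarrow>
           (\<forall>x y::nat \<Rightarrow> 'r. (\<Sum>i<n. x i * y i) = 1 \<longrightarrow> in_S (2^(n-1)) (Psi n x y))
           \<and> Psi n (e1::nat \<Rightarrow> 'r) e1 = ofm (sigma (2^(n-1))))
      \<and> (n mod 4 = 2 \<longrightarrow>
           (\<forall>x y::nat \<Rightarrow> 'r. (\<Sum>i<n. x i * y i) = 1 \<longrightarrow> in_Sp (2^(n-1)) (Psi n x y))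
           \<and> Psi n (e1::nat \<Rightarrow> 'r) e1 = 1\<^sub>m (2^(n-1)))
      \<and> (n mod 4 = 3 \<longrightarrow>
           (\<forall>x y::nat \<Rightarrow> 'r. (\<Sum>i<n. x i * y i) = 1 \<longrightarrow> in_A (2^(n-1)) (Psi n x y))
           \<and> Psi n (e1::nat \<Rightarrow> 'r) e1 = ofm (psi (2^(n-1)))))"
proof -
  have A: "\<forall>t::'r. t dvd 1 \<longrightarrow> in_S 2 (Psi1 t)" using Psi1_ok by blast
  have B: "\<And>n. n \<ge> 2 \<Longrightarrow>
        (n mod 4 = 0 \<longrightarrow>
           (\<forall>x y::nat \<Rightarrow> 'r. (\<Sum>i<n. x i * y i) = 1 \<longrightarrow> in_O (2^(n-1)) (Psi n x y))
           \<and> Psi n (e1::nat \<Rightarrow> 'r) e1 = 1\<^sub>m (2^(n-1)))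
      \<and> (n mod 4 = 1 \<longrightarrow>
           (\<forall>x y::nat \<Rightarrow> 'r. (\<Sum>i<n. x i * y i) = 1 \<longrightarrow> in_S (2^(n-1)) (Psi n x y))
           \<and> Psi n (e1::nat \<Rightarrow> 'r) e1 = ofm (sigma (2^(n-1))))
      \<and> (n mod 4 = 2 \<longrightarrow>
           (\<forall>x y::nat \<Rightarrow> 'r. (\<Sum>i<n. x i * y i) = 1 \<longrightarrow> in_Sp (2^(n-1)) (Psi n x y))
           \<and> Psi n (e1::nat \<Rightarrow> 'r) e1 = 1\<^sub>m (2^(n-1)))
      \<and> (n mod 4 = 3 \<longrightarrow>
           (\<forall>x y::nat \<Rightarrow> 'r. (\<Sum>i<n. x i * y i) = 1 \<longrightarrow> in_A (2^(n-1)) (Psi n x y))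
           \<and> Psi n (e1::nat \<Rightarrow> 'r) e1 = ofm (psi (2^(n-1))))"
  proof -
    fix n :: nat assume n2: "n \<ge> 2"
    show "?thesis n"
    proof (intro conjI impI)
      assume m: "n mod 4 = 0"
      hence ev: "even n" by presburger
      show "\<forall>x y::nat \<Rightarrow> 'r. (\<Sum>i<n. x i * y i) = 1 \<longrightarrow> in_O (2^(n-1)) (Psi n x y)"
        using main_even[OF n2 ev] m unfolding in_O_def in_GL_def by auto
      show "Psi n (e1::nat \<Rightarrow> 'r) e1 = 1\<^sub>m (2^(n-1))" by (rule base_even[OF n2 ev])
    next
      assume m: "n mod 4 = 2"
      hence ev: "even n" by presburger
      show "\<forall>x y::nat \<Rightarrow> 'r. (\<Sum>i<n. x i * y i) = 1 \<longrightarrow> in_Sp (2^(n-1)) (Psi n x y)"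
        using main_even[OF n2 ev] m unfolding in_Sp_def in_GL_def by auto
      show "Psi n (e1::nat \<Rightarrow> 'r) e1 = 1\<^sub>m (2^(n-1))" by (rule base_even[OF n2 ev])
    next
      assume m: "n mod 4 = 1"
      hence od: "odd n" by presburger
      show "\<forall>x y::nat \<Rightarrow> 'r. (\<Sum>i<n. x i * y i) = 1 \<longrightarrow> in_S (2^(n-1)) (Psi n x y)"
        using main_odd[OF n2 od] m unfolding in_S_def in_GL_def by auto
      show "Psi n (e1::nat \<Rightarrow> 'r) e1 = ofm (sigma (2^(n-1)))" using base_odd[OF n2 od] m by simp
    next
      assume m: "n mod 4 = 3"
      hence od: "odd n" by presburger
      show "\<forall>x y::nat \<Rightarrow> 'r. (\<Sum>i<n. x i * y i) = 1 \<longrightarrow> in_A (2^(n-1)) (Psi n x y)"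
        using main_odd[OF n2 od] m unfolding in_A_def in_GL_def by auto
      show "Psi n (e1::nat \<Rightarrow> 'r) e1 = ofm (psi (2^(n-1)))" using base_odd[OF n2 od] m by simp
    qed
  qed
  show ?thesis using A B by blast
qed

end
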